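(* Let $H$ be a Hopf algebra and $C$ a right $H$-Hopf-Galois co-object with cotranslation map $\tau$. Then $C$ is a Hopf heap with operation $\chi_{(C,H)}(a\otimes b\otimes c)=[a,b,c]=a\cdot\tau(b\otimes c)$, this Hopf heap has a Grunspan map, namely $\vartheta(c)=\sum c_{(1)}\cdot S\tau(c_{(3)}\otimes c_{(2)})$, and the map $\mathrm{Tn}^rC\to H$, $\tau_a^b\mapsto\tau(a\otimes b)$, is a well-defined isomorphism of Hopf algebras (with inverse $h\mapsto\tau_{e_{(1)}}^{e_{(2)}\cdot h}$ for any $e$ with $\varepsilon(e)=1$).
   Context: Work over a field $\mathbb{F}$; coalgebras coassociative, counital, nonzero, Sweedler notation; $C^{\mathrm{co}}$ co-opposite. For a Hopf algebra $H$ (antipode $S$), a right $H$-module coalgebra is a coalgebra $C$ with right action $c\cdot h$ satisfying $\Delta(c\cdot h)=\sum c_{(1)}\cdot h_{(1)}\otimes c_{(2)}\cdot h_{(2)}$, $\varepsilon(c\cdot h)=\varepsilon(c)\varepsilon(h)$; it is a right Hopf-Galois co-object if (a) $\ker\varepsilon=\mathrm{span}\{c\cdot h-c\varepsilon(h)\}$ and (b) $\mathrm{can}:C\otimes H\to C\otimes C$, $c\otimes h\mapsto\sum c_{(1)}\otimes c_{(2)}\cdot h$ is bijective. The cotranslation map is $\tau=(\varepsilon\otimes\mathrm{id})\circ\mathrm{can}^{-1}:C\otimes C\to H$. A Hopf heap is a coalgebra $C$ with a coalgebra map $\chi:C\otimes C^{\mathrm{co}}\otimes C\to C$, $a\otimes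 b\otimes c\mapsto[a,b,c]$, with $[[a,b,c],d,e]=[a,b,[c,d,e]]$ and $\sum[c_{(1)},c_{(2)},a]=\sum[a,c_{(1)},c_{(2)}]=\varepsilon(c)a$. A Grunspan map is a coalgebra map $\vartheta:C\to C$ with $[[a,b,\vartheta(c)],d,e]=[a,[d,c,b],e]$. $\mathrm{Tn}^rC$ is the span of $\tau_a^b:c\mapsto[c,a,b]$, a Hopf algebra with product $\tau_a^b\tau_c^d=\tau_c^d\circ\tau_a^b=\tau_a^{[b,c,d]}$, unit $\mathrm{id}$, $\Delta(\tau_a^b)=\sum\tau_{a_{(2)}}^{b_{(1)}}\otimes\tau_{a_{(1)}}^{b_{(2)}}$, $\varepsilon(\tau_a^b)=\varepsilon(a)\varepsilon(b)$. *)

theory Defs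
  imports Complex_Main "HOL-Library.Poly_Mapping" "HOL-Library.Function_Algebras"
begin

(* Vector spaces over a field 'k are modelled as spaces of finitely supported
functions 'b \<Rightarrow>\<^sub>0 'k (every vector space has a basis, so this loses no generality).
The tensor product of ('a,'k) vec and ('b,'k) vec is ('a \<times> 'b,'k) vec, with
elementary tensors tsr x y.  Linear maps out of a tensor product are given by
multilinear maps; tlift B is the linear map on the tensor product induced by a
bilinear B (evaluated on basis vectors), which renders Sweedler sums faithfully. *)

type_synonym ('b,'k) vec = "'b \<Rightarrow>\<^sub>0 'k"

definition sc :: "'k::field \<Rightarrow> ('b,'k) vec \<Rightarrow> ('b,'k) vec" where
  "sc c v = Poly_Mapping.map (\<lambda>x. c * x) v"

definition bv :: "'b \<Rightarrow> ('b,'k::field) vec" where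
  "bv i = Poly_Mapping.single i 1"

definition tsr :: "('a,'k::field) vec \<Rightarrow> ('b,'k) vec \<Rightarrow> ('a \<times> 'b,'k) vec" where
  "tsr x y = (\<Sum>p\<in>Poly_Mapping.keys x \<times> Poly_Mapping.keys y. Poly_Mapping.single p (Poly_Mapping.lookup x (fst p) * Poly_Mapping.lookup y (snd p)))"

definition tlift :: "(('a,'k::field) vec \<Rightarrow> ('b,'k) vec \<Rightarrow> ('u,'k) vec)
    \<Rightarrow> ('a \<times> 'b,'k) vec \<Rightarrow> ('u,'k) vec" where
  "tlift B t = (\<Sum>p\<in>Poly_Mapping.keys t. sc (Poly_Mapping.lookup t p) (B (bv (fst p)) (bv (snd p))))"

definition tassoc :: "('a \<times> ('b \<times> 'c),'k::field) vec \<Rightarrow> (('a \<times> 'b) \<times> 'c,'k) vec" where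
  "tassoc t = tlift (\<lambda>x yz. tlift (\<lambda>y z. tsr (tsr x y) z) yz) t"

definition lin :: "(('a,'k::field) vec \<Rightarrow> ('b,'k) vec) \<Rightarrow> bool" where
  "lin f \<longleftrightarrow> (\<forall>x y. f (x + y) = f x + f y) \<and> (\<forall>c x. f (sc c x) = sc c (f x))"

definition linf :: "(('a,'k::field) vec \<Rightarrow> 'k) \<Rightarrow> bool" where
  "linf f \<longleftrightarrow> (\<forall>x y. f (x + y) = f x + f y) \<and> (\<forall>c x. f (sc c x) = c * f x)"

definition bilin :: "(('a,'k::field) vec \<Rightarrow> ('b,'k) vec \<Rightarrow> ('c,'k) vec) \<Rightarrow> bool" where
  "bilin B \<longleftrightarrow> (\<forall>x. lin (B x)) \<and> (\<forall>y. lin (\<lambda>x. B x y))"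

definition trilin :: "(('a,'k::field) vec \<Rightarrow> ('b,'k) vec \<Rightarrow> ('c,'k) vec \<Rightarrow> ('d,'k) vec) \<Rightarrow> bool" where
  "trilin T \<longleftrightarrow> (\<forall>x y. lin (T x y)) \<and> (\<forall>x z. lin (\<lambda>y. T x y z)) \<and> (\<forall>y z. lin (\<lambda>x. T x y z))"

definition coalgebra :: "(('c,'k::field) vec \<Rightarrow> ('c \<times> 'c,'k) vec) \<Rightarrow> (('c,'k) vec \<Rightarrow> 'k) \<Rightarrow> bool" where
  "coalgebra \<Delta> \<epsilon> \<longleftrightarrow> lin \<Delta> \<and> linf \<epsilon>
     \<and> (\<forall>c. tlift (\<lambda>x y. tsr (\<Delta> x) y) (\<Delta> c) = tassoc (tlift (\<lambda>x y. tsr x (\<Delta> y)) (\<Delta> c)))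
     \<and> (\<forall>c. tlift (\<lambda>x y. sc (\<epsilon> x) y) (\<Delta> c) = c)
     \<and> (\<forall>c. tlift (\<lambda>x y. sc (\<epsilon> y) x) (\<Delta> c) = c)
     \<and> (\<exists>c::('c,'k) vec. c \<noteq> 0)"

definition coalg_map :: "(('c,'k::field) vec \<Rightarrow> ('c \<times> 'c,'k) vec) \<Rightarrow> (('c,'k) vec \<Rightarrow> 'k)
    \<Rightarrow> (('d,'k) vec \<Rightarrow> ('d \<times> 'd,'k) vec) \<Rightarrow> (('d,'k) vec \<Rightarrow> 'k)
    \<Rightarrow> (('c,'k) vec \<Rightarrow> ('d,'k) vec) \<Rightarrow> bool" where
  "coalg_map \<Delta> \<epsilon> \<Delta>' \<epsilon>' f \<longleftrightarrow> lin f
     \<and> (\<forall>c. \<Delta>' (f c) = tlift (\<lambda>x y. tsr (f x) (f y)) (\<Delta> c))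
     \<and> (\<forall>c. \<epsilon>' (f c) = \<epsilon> c)"

definition hopf_algebra :: "(('h,'k::field) vec \<Rightarrow> ('h,'k) vec \<Rightarrow> ('h,'k) vec) \<Rightarrow> ('h,'k) vec
    \<Rightarrow> (('h,'k) vec \<Rightarrow> ('h \<times> 'h,'k) vec) \<Rightarrow> (('h,'k) vec \<Rightarrow> 'k)
    \<Rightarrow> (('h,'k) vec \<Rightarrow> ('h,'k) vec) \<Rightarrow> bool" where
  "hopf_algebra m u \<Delta> \<epsilon> S \<longleftrightarrow>
     bilin m \<and> (\<forall>x y z. m (m x y) z = m x (m y z)) \<and> (\<forall>x. m u x = x \<and> m x u = x)
     \<and> coalgebra \<Delta> \<epsilon>
     \<and> (\<forall>g h. \<Delta> (m g h) = tlift (\<lambda>a b. tlift (\<lambda>c d. tsr (m a c) (m b d)) (\<Delta> h)) (\<Delta> g))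
     \<and> \<Delta> u = tsr u u
     \<and> (\<forall>g h. \<epsilon> (m g h) = \<epsilon> g * \<epsilon> h) \<and> \<epsilon> u = 1
     \<and> lin S
     \<and> (\<forall>h. tlift (\<lambda>x y. m (S x) y) (\<Delta> h) = sc (\<epsilon> h) u)
     \<and> (\<forall>h. tlift (\<lambda>x y. m x (S y)) (\<Delta> h) = sc (\<epsilon> h) u)"

definition module_coalgebra :: "(('h,'k::field) vec \<Rightarrow> ('h,'k) vec \<Rightarrow> ('h,'k) vec) \<Rightarrow> ('h,'k) vec
    \<Rightarrow> (('h,'k) vec \<Rightarrow> ('h \<times> 'h,'k) vec) \<Rightarrow> (('h,'k) vec \<Rightarrow> 'k)
    \<Rightarrow> (('c,'k) vec \<Rightarrow> ('c \<times> 'c,'k) vec) \<Rightarrow> (('c,'k) vec \<Rightarrow> 'k)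
    \<Rightarrow> (('c,'k) vec \<Rightarrow> ('h,'k) vec \<Rightarrow> ('c,'k) vec) \<Rightarrow> bool" where
  "module_coalgebra m u \<Delta>H \<epsilon>H \<Delta> \<epsilon> act \<longleftrightarrow>
     coalgebra \<Delta> \<epsilon> \<and> bilin act
     \<and> (\<forall>c. act c u = c) \<and> (\<forall>c h g. act (act c h) g = act c (m h g))
     \<and> (\<forall>c h. \<Delta> (act c h) = tlift (\<lambda>c1 c2. tlift (\<lambda>h1 h2. tsr (act c1 h1) (act c2 h2)) (\<Delta>H h)) (\<Delta> c))
     \<and> (\<forall>c h. \<epsilon> (act c h) = \<epsilon> c * \<epsilon>H h)"

definition can_map :: "(('c,'k::field) vec \<Rightarrow> ('c \<times> 'c,'k) vec)
    \<Rightarrow> (('c,'k) vec \<Rightarrow> ('h,'k) vec \<Rightarrow> ('c,'k) vec) \<Rightarrow> ('c \<times> 'h,'k) vec \<Rightarrow> ('c \<times> 'c,'k) vec" where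
  "can_map \<Delta> act = tlift (\<lambda>c h. tlift (\<lambda>c1 c2. tsr c1 (act c2 h)) (\<Delta> c))"

definition hopf_galois_coobject :: "(('h,'k::field) vec \<Rightarrow> ('h,'k) vec \<Rightarrow> ('h,'k) vec) \<Rightarrow> ('h,'k) vec
    \<Rightarrow> (('h,'k) vec \<Rightarrow> ('h \<times> 'h,'k) vec) \<Rightarrow> (('h,'k) vec \<Rightarrow> 'k)
    \<Rightarrow> (('c,'k) vec \<Rightarrow> ('c \<times> 'c,'k) vec) \<Rightarrow> (('c,'k) vec \<Rightarrow> 'k)
    \<Rightarrow> (('c,'k) vec \<Rightarrow> ('h,'k) vec \<Rightarrow> ('c,'k) vec) \<Rightarrow> bool" where
  "hopf_galois_coobject m u \<Delta>H \<epsilon>H \<Delta> \<epsilon> act \<longleftrightarrow>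
     module_coalgebra m u \<Delta>H \<epsilon>H \<Delta> \<epsilon> act
     \<and> {c. \<epsilon> c = 0} = module.span sc {act c h - sc (\<epsilon>H h) c | c h. True}
     \<and> bij (can_map \<Delta> act)"

definition cotrans :: "(('c,'k::field) vec \<Rightarrow> ('c \<times> 'c,'k) vec) \<Rightarrow> (('c,'k) vec \<Rightarrow> 'k)
    \<Rightarrow> (('c,'k) vec \<Rightarrow> ('h,'k) vec \<Rightarrow> ('c,'k) vec) \<Rightarrow> ('c \<times> 'c,'k) vec \<Rightarrow> ('h,'k) vec" where
  "cotrans \<Delta> \<epsilon> act t = tlift (\<lambda>c h. sc (\<epsilon> c) h) (inv (can_map \<Delta> act) t)"

(* Hopf heap: chi a b c = [a,b,c] is a coalgebra map C \<otimes> C^co \<otimes> C \<rightarrow> C. *)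
definition hopf_heap :: "(('c,'k::field) vec \<Rightarrow> ('c \<times> 'c,'k) vec) \<Rightarrow> (('c,'k) vec \<Rightarrow> 'k)
    \<Rightarrow> (('c,'k) vec \<Rightarrow> ('c,'k) vec \<Rightarrow> ('c,'k) vec \<Rightarrow> ('c,'k) vec) \<Rightarrow> bool" where
  "hopf_heap \<Delta> \<epsilon> chi \<longleftrightarrow> coalgebra \<Delta> \<epsilon> \<and> trilin chi
     \<and> (\<forall>a b c. \<Delta> (chi a b c) = tlift (\<lambda>a1 a2. tlift (\<lambda>b1 b2. tlift (\<lambda>c1 c2.
            tsr (chi a1 b2 c1) (chi a2 b1 c2)) (\<Delta> c)) (\<Delta> b)) (\<Delta> a))
     \<and> (\<forall>a b c. \<epsilon> (chi a b c) = \<epsilon> a * \<epsilon> b * \<epsilon> c)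
     \<and> (\<forall>a b c d e. chi (chi a b c) d e = chi a b (chi c d e))
     \<and> (\<forall>a c. tlift (\<lambda>c1 c2. chi c1 c2 a) (\<Delta> c) = sc (\<epsilon> c) a)
     \<and> (\<forall>a c. tlift (\<lambda>c1 c2. chi a c1 c2) (\<Delta> c) = sc (\<epsilon> c) a)"

definition grunspan_map :: "(('c,'k::field) vec \<Rightarrow> ('c \<times> 'c,'k) vec) \<Rightarrow> (('c,'k) vec \<Rightarrow> 'k)
    \<Rightarrow> (('c,'k) vec \<Rightarrow> ('c,'k) vec \<Rightarrow> ('c,'k) vec \<Rightarrow> ('c,'k) vec)
    \<Rightarrow> (('c,'k) vec \<Rightarrow> ('c,'k) vec) \<Rightarrow> bool" where
  "grunspan_map \<Delta> \<epsilon> chi \<theta> \<longleftrightarrow> coalg_map \<Delta> \<epsilon> \<Delta> \<epsilon> \<theta>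
     \<and> (\<forall>a b c d e. chi (chi a b (\<theta> c)) d e = chi a (chi d c b) e)"

definition fsc :: "'k::field \<Rightarrow> (('c,'k) vec \<Rightarrow> ('c,'k) vec) \<Rightarrow> ('c,'k) vec \<Rightarrow> ('c,'k) vec" where
  "fsc c f = (\<lambda>v. sc c (f v))"

definition transl :: "(('c,'k::field) vec \<Rightarrow> ('c,'k) vec \<Rightarrow> ('c,'k) vec \<Rightarrow> ('c,'k) vec)
    \<Rightarrow> ('c,'k) vec \<Rightarrow> ('c,'k) vec \<Rightarrow> ('c,'k) vec \<Rightarrow> ('c,'k) vec" where
  "transl chi a b = (\<lambda>v. chi v a b)"

definition Tn :: "(('c,'k::field) vec \<Rightarrow> ('c,'k) vec \<Rightarrow> ('c,'k) vec \<Rightarrow> ('c,'k) vec)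
    \<Rightarrow> (('c,'k) vec \<Rightarrow> ('c,'k) vec) set" where
  "Tn chi = module.span fsc {transl chi a b | a b. True}"

end

theory Submission
  imports Defs
begin


abbreviation lookup where "lookup \<equiv> Poly_Mapping.lookup"
abbreviation keys where "keys \<equiv> Poly_Mapping.keys"
abbreviation single where "single \<equiv> Poly_Mapping.single"
lemmas poly_mapping_eqI = Poly_Mapping.poly_mapping_eqI
lemmas lookup_add = Poly_Mapping.lookup_add
lemmas lookup_sum = Poly_Mapping.lookup_sum
lemmas lookup_single = Poly_Mapping.lookup_single
lemmas in_keys_iff = Poly_Mapping.in_keys_iff
lemmas keys_add = Poly_Mapping.keys_add
lemmas lookup_minus = Poly_Mapping.lookup_minus
lemmas lookup_uminus = Poly_Mapping.lookup_uminus

lemma lookup_sc[simp]: "lookup (sc c v) k = c * lookup v k"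
  unfolding sc_def by transfer (auto simp: when_def)

lemma sc_add_left: "sc (a + b) v = sc a v + sc b v"
  by (rule poly_mapping_eqI) (simp add: lookup_add distrib_right)
lemma sc_add_right: "sc a (v + w) = sc a v + sc a w"
  by (rule poly_mapping_eqI) (simp add: lookup_add distrib_left)
lemma sc_sc[simp]: "sc a (sc b v) = sc (a * b) v"
  by (rule poly_mapping_eqI) simp
lemma sc_one[simp]: "sc 1 v = v"
  by (rule poly_mapping_eqI) simp
lemma sc_zero_left[simp]: "sc 0 v = 0"
  by (rule poly_mapping_eqI) simp
lemma sc_zero_right[simp]: "sc a 0 = 0"
  by (rule poly_mapping_eqI) simp
lemma sc_sum_right: "sc a (sum f A) = (\<Sum>x\<in>A. sc a (f x))"
  by (rule poly_mapping_eqI) (simp add: lookup_sum sum_distrib_left)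
lemma sc_sum_left: "sc (sum f A) v = (\<Sum>x\<in>A. sc (f x) v)"
  by (rule poly_mapping_eqI) (simp add: lookup_sum sum_distrib_right)
lemma sc_minus_right: "sc a (v - w) = sc a v - sc a w"
  by (rule poly_mapping_eqI) (simp add: lookup_minus right_diff_distrib)
lemma sc_uminus_right: "sc a (- v) = - sc a v"
  by (rule poly_mapping_eqI) (simp add: lookup_uminus)

lemma lookup_bv: "lookup (bv i) k = (if i = k then 1 else 0)"
  unfolding bv_def by (simp add: lookup_single)
lemma keys_bv[simp]: "keys (bv i :: ('a,'k::field) vec) = {i}"
  unfolding bv_def by simp
lemma sc_bv: "sc c (bv i) = single i c"
  by (rule poly_mapping_eqI) (simp add: lookup_bv lookup_single when_def)

lemma vec_decomp: "v = (\<Sum>k\<in>keys v. sc (lookup v k) (bv k))"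
proof (rule poly_mapping_eqI)
  fix j
  have "lookup (\<Sum>k\<in>keys v. sc (lookup v k) (bv k)) j = (\<Sum>k\<in>keys v. if k = j then lookup v k else 0)"
    by (simp add: lookup_sum lookup_bv if_distrib[of "\<lambda>x. _ * x"] cong: if_cong)
  also have "\<dots> = lookup v j"
    by (simp add: sum.delta' in_keys_iff)
  finally show "lookup v j = lookup (\<Sum>k\<in>keys v. sc (lookup v k) (bv k)) j" by simp
qed

lemma vec_decomp_sup: "finite A \<Longrightarrow> keys v \<subseteq> A \<Longrightarrow> v = (\<Sum>k\<in>A. sc (lookup v k) (bv k))"
  using vec_decomp[of v] sum.mono_neutral_left[of A "keys v" "\<lambda>k. sc (lookup v k) (bv k)"]
  by (auto simp: in_keys_iff)

lemma lookup_tsr[simp]: "lookup (tsr (x::('a,'k::field) vec) (y::('b,'k) vec)) p = lookup x (fst p) * lookup y (snd p)"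
proof -
  have "lookup (tsr x y) p = (\<Sum>q\<in>keys x \<times> keys y. (lookup x (fst q) * lookup y (snd q) when q = p))"
    unfolding tsr_def by (simp add: lookup_sum lookup_single)
  also have "\<dots> = lookup x (fst p) * lookup y (snd p)"
    by (cases p) (auto simp: when_def in_keys_iff)
  finally show ?thesis .
qed

lemma keys_tsr: "keys (tsr x y) \<subseteq> keys x \<times> keys y"
  by (auto simp: in_keys_iff)

lemma tsr_add_left: "tsr (x + x') y = tsr x y + tsr x' y"
  by (rule poly_mapping_eqI) (simp add: lookup_add distrib_right)
lemma tsr_add_right: "tsr x (y + y') = tsr x y + tsr x y'"
  by (rule poly_mapping_eqI) (simp add: lookup_add distrib_left)
lemma tsr_sc_left: "tsr (sc c x) y = sc c (tsr x y)"
  by (rule poly_mapping_eqI) (simp add: mult.assoc)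
lemma tsr_sc_right: "tsr x (sc c y) = sc c (tsr x y)"
  by (rule poly_mapping_eqI) (simp add: mult.left_commute)
lemma tsr_zero_left[simp]: "tsr 0 y = 0"
  by (rule poly_mapping_eqI) simp
lemma tsr_zero_right[simp]: "tsr x 0 = 0"
  by (rule poly_mapping_eqI) simp
lemma tsr_bv: "tsr (bv i) (bv j) = bv (i, j)"
  by (rule poly_mapping_eqI) (auto simp: lookup_bv)

lemma linD: "lin f \<Longrightarrow> f (x + y) = f x + f y" "lin f \<Longrightarrow> f (sc c x) = sc c (f x)"
  by (auto simp: lin_def)
lemma lin_zero: "lin f \<Longrightarrow> f 0 = 0"
  using linD(2)[of f 0 0] by simp
lemma lin_sum: "lin f \<Longrightarrow> f (sum g A) = (\<Sum>x\<in>A. f (g x))"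
  by (induct A rule: infinite_finite_induct) (auto simp: lin_zero linD)
lemma lin_minus: "lin f \<Longrightarrow> f (x - y) = f x - f y"
  using linD(1)[of f "x - y" y] by (simp add: algebra_simps)
lemma linfD: "linf f \<Longrightarrow> f (x + y) = f x + f y" "linf f \<Longrightarrow> f (sc c x) = c * f x"
  by (auto simp: linf_def)
lemma linf_zero: "linf f \<Longrightarrow> f 0 = 0"
  using linfD(2)[of f 0 0] by simp
lemma linf_sum: "linf f \<Longrightarrow> f (sum g A) = (\<Sum>x\<in>A. f (g x))"
  by (induct A rule: infinite_finite_induct) (auto simp: linf_zero linfD)

lemma lin_expand: "lin f \<Longrightarrow> f v = (\<Sum>k\<in>keys v. sc (lookup v k) (f (bv k)))"
proof -
  assume l: "lin f"
  have "f v = f (\<Sum>k\<in>keys v. sc (lookup v k) (bv k))" using vec_decomp[of v] by simp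
  then show ?thesis using l by (simp add: lin_sum linD)
qed

lemma lin_eqI: "lin f \<Longrightarrow> lin g \<Longrightarrow> (\<And>i. f (bv i) = g (bv i)) \<Longrightarrow> f = g"
proof (rule ext)
  fix v assume "lin f" "lin g" "\<And>i. f (bv i) = g (bv i)"
  then show "f v = g v" using lin_expand[of f v] lin_expand[of g v] by simp
qed

lemma lin_eqI2: "lin f \<Longrightarrow> lin g \<Longrightarrow> (\<And>x y. f (tsr x y) = g (tsr x y)) \<Longrightarrow> f = g"
  by (rule lin_eqI) (auto simp: tsr_bv[symmetric])

lemma bilin_expand:
  assumes b: "bilin B"
  shows "B x y = (\<Sum>i\<in>keys x. \<Sum>j\<in>keys y. sc (lookup x i * lookup y j) (B (bv i) (bv j)))"
proof -
  have l1: "lin (\<lambda>x. B x y')" for y' using b by (simp add: bilin_def)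
  have l2: "lin (B x')" for x' using b by (simp add: bilin_def)
  have "B x y = (\<Sum>i\<in>keys x. sc (lookup x i) (B (bv i) y))"
    using lin_expand[OF l1[of y], where v=x] by simp
  also have "\<dots> = (\<Sum>i\<in>keys x. sc (lookup x i) (\<Sum>j\<in>keys y. sc (lookup y j) (B (bv i) (bv j))))"
    using lin_expand[OF l2, where v=y] by simp
  finally show ?thesis by (simp add: sc_sum_right)
qed

lemma tlift_sup: "finite A \<Longrightarrow> keys t \<subseteq> A \<Longrightarrow>
   tlift B t = (\<Sum>p\<in>A. sc (lookup t p) (B (bv (fst p)) (bv (snd p))))"
  unfolding tlift_def
  by (rule sum.mono_neutral_left) (auto simp: in_keys_iff)

lemma lin_tlift[simp,intro]: "lin (tlift B)"
proof -
  have add: "tlift B (x + y) = tlift B x + tlift B y" for x y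
  proof -
    let ?A = "keys x \<union> keys y"
    have "keys (x + y) \<subseteq> ?A" by (rule keys_add)
    then show ?thesis
      by (simp add: tlift_sup[of ?A] lookup_add sc_add_left sum.distrib)
  qed
  have "tlift B (sc c x) = sc c (tlift B x)" for c x
  proof -
    have "keys (sc c x) \<subseteq> keys x" by (auto simp: in_keys_iff)
    then show ?thesis
      by (simp add: tlift_sup[of "keys x"] sc_sum_right)
  qed
  with add show ?thesis by (simp add: lin_def)
qed

lemma tlift_add_fun: "tlift (\<lambda>x y. B x y + B' x y) t = tlift B t + tlift B' t"
  unfolding tlift_def by (simp add: sc_add_right sum.distrib)
lemma tlift_sc_fun: "tlift (\<lambda>x y. sc c (B x y)) t = sc c (tlift B t)"
  unfolding tlift_def by (simp add: sc_sum_right mult.commute)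
lemma tlift_zero_fun[simp]: "tlift (\<lambda>x y. 0) t = 0"
  unfolding tlift_def by simp
lemma tlift_sum_fun: "tlift (\<lambda>x y. \<Sum>a\<in>A. B a x y) t = (\<Sum>a\<in>A. tlift (B a) t)"
  by (induct A rule: infinite_finite_induct) (simp_all add: tlift_add_fun)

lemma tlift_comp: "lin f \<Longrightarrow> f (tlift B t) = tlift (\<lambda>x y. f (B x y)) t"
  unfolding tlift_def by (simp add: lin_sum linD)

lemma linf_tlift: "linf g \<Longrightarrow> sc (g (tlift B t)) v = tlift (\<lambda>x y. sc (g (B x y)) v) t"
  unfolding tlift_def by (simp add: linf_sum linfD sc_sum_left)

lemma tlift_bv[simp]: "tlift B (bv (i, j)) = B (bv i) (bv j)"
  unfolding tlift_def by (simp add: lookup_bv)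

lemma tlift_tsr_gen: "tlift B (tsr x y) = (\<Sum>i\<in>keys x. \<Sum>j\<in>keys y. sc (lookup x i * lookup y j) (B (bv i) (bv j)))"
  by (simp add: tlift_sup[OF _ keys_tsr] sum.cartesian_product split_beta)

lemma tlift_tsr: "bilin B \<Longrightarrow> tlift B (tsr x y) = B x y"
  using bilin_expand[of B x y] by (simp add: tlift_tsr_gen)

lemma tlift_basis_cong: "(\<And>i j. B (bv i) (bv j) = B' (bv i) (bv j)) \<Longrightarrow> tlift B t = tlift B' t"
  unfolding tlift_def by simp

lemma tlift_cong: "(\<And>x y. B x y = B' x y) \<Longrightarrow> tlift B t = tlift B' t"
  by (rule tlift_basis_cong) simp

lemma tlift_swap: "tlift (\<lambda>x y. tlift (\<lambda>z w. B x y z w) t2) t1 = tlift (\<lambda>z w. tlift (\<lambda>x y. B x y z w) t1) t2"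
  unfolding tlift_def sc_sum_right sc_sc
  by (subst sum.swap) (simp add: mult.commute)




lemma lin_id[intro!]: "lin (\<lambda>x. x)"
  by (simp add: lin_def)
lemma lin_zero_fun[intro!]: "lin (\<lambda>x. 0)"
  by (simp add: lin_def)
lemma lin_add_fun[intro!]: "lin f \<Longrightarrow> lin g \<Longrightarrow> lin (\<lambda>x. f x + g x)"
  by (simp add: lin_def sc_add_right)
lemma lin_sc_fun[intro!]: "lin g \<Longrightarrow> lin (\<lambda>x. sc c (g x))"
  by (simp add: lin_def sc_add_right mult.commute)
lemma lin_scf_fun[intro!]: "linf \<phi> \<Longrightarrow> lin g \<Longrightarrow> lin (\<lambda>x. sc (\<phi> (g x)) v)"
  by (simp add: lin_def linf_def sc_add_left)
lemma lin_tsr1[intro!]: "lin g \<Longrightarrow> lin (\<lambda>x. tsr (g x) y)"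
  by (simp add: lin_def tsr_add_left tsr_sc_left)
lemma lin_tsr2[intro!]: "lin g \<Longrightarrow> lin (\<lambda>x. tsr y (g x))"
  by (simp add: lin_def tsr_add_right tsr_sc_right)
lemma lin_tlift_arg[intro!]: "lin g \<Longrightarrow> lin (\<lambda>x. tlift B (g x))"
  using lin_tlift[of B] by (simp add: lin_def)
lemma lin_tlift_param[intro!]: "(\<And>a b. lin (\<lambda>x. B x a b)) \<Longrightarrow> lin (\<lambda>x. tlift (B x) t)"
  by (simp add: lin_def tlift_def sc_add_right sum.distrib sc_sum_right mult.commute)
lemma lin_compose: "lin f \<Longrightarrow> lin g \<Longrightarrow> lin (\<lambda>x. f (g x))"
  by (simp add: lin_def)

lemma bilinI[intro!]: "(\<And>x. lin (B x)) \<Longrightarrow> (\<And>y. lin (\<lambda>x. B x y)) \<Longrightarrow> bilin B"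
  by (simp add: bilin_def)
lemma trilinI[intro!]: "(\<And>x y. lin (T x y)) \<Longrightarrow> (\<And>x z. lin (\<lambda>y. T x y z)) \<Longrightarrow> (\<And>y z. lin (\<lambda>x. T x y z)) \<Longrightarrow> trilin T"
  by (simp add: trilin_def)

lemma lin_eta: "lin f \<Longrightarrow> lin (\<lambda>x. f x)" by simp

lemma tlift_tsr_id[simp]: "tlift (\<lambda>x y. tsr x y) t = t"
proof -
  have "tlift (\<lambda>x y. tsr x y) = (\<lambda>t. t)"
    by (rule lin_eqI) (auto simp: tsr_bv)
  then show ?thesis by metis
qed

lemma sc_bv_eq: "sc a (bv i) = sc b (bv i) \<Longrightarrow> a = b"
  by (metis lookup_sc lookup_bv mult_1_right)

definition ext1 :: "('a \<Rightarrow> ('b,'k::field) vec) \<Rightarrow> ('a,'k) vec \<Rightarrow> ('b,'k) vec" where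
  "ext1 g x = (\<Sum>i\<in>keys x. sc (lookup x i) (g i))"

lemma ext1_sup: "finite A \<Longrightarrow> keys x \<subseteq> A \<Longrightarrow> ext1 g x = (\<Sum>i\<in>A. sc (lookup x i) (g i))"
  unfolding ext1_def by (rule sum.mono_neutral_left) (auto simp: in_keys_iff)

lemma lin_ext1[intro!]: "lin (\<lambda>x. ext1 g (f x))" if "lin f"
proof -
  have "lin (ext1 g)"
  proof -
    have add: "ext1 g (x + y) = ext1 g x + ext1 g y" for x y
      by (simp add: ext1_sup[of "keys x \<union> keys y"] keys_add lookup_add sc_add_left sum.distrib)
    have "ext1 g (sc c x) = sc c (ext1 g x)" for c x
      by (simp add: ext1_sup[of "keys x"] in_keys_iff sc_sum_right subset_iff)
    with add show ?thesis by (simp add: lin_def)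
  qed
  then show ?thesis using lin_compose[of "ext1 g" f] that by simp
qed

lemma lin_ext1_param[intro!]: "(\<And>i. lin (\<lambda>y. g y i)) \<Longrightarrow> lin (\<lambda>y. ext1 (g y) x)"
  by (simp add: lin_def ext1_def sc_add_right sum.distrib sc_sum_right mult.commute)

lemma ext1_bv[simp]: "ext1 g (bv i) = g i"
  by (simp add: ext1_def lookup_bv)

definition ext3 :: "(('a,'k::field) vec \<Rightarrow> ('b,'k) vec \<Rightarrow> ('c,'k) vec \<Rightarrow> ('d,'k) vec) \<Rightarrow> ('a,'k) vec \<Rightarrow> ('b,'k) vec \<Rightarrow> ('c,'k) vec \<Rightarrow> ('d,'k) vec" where
  "ext3 T x y z = ext1 (\<lambda>i. ext1 (\<lambda>j. ext1 (\<lambda>k. T (bv i) (bv j) (bv k)) z) y) x"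

lemma trilin_ext3: "trilin (ext3 T)"
  unfolding ext3_def by (intro trilinI) auto

lemma ext3_bv[simp]: "ext3 T (bv i) (bv j) (bv k) = T (bv i) (bv j) (bv k)"
  by (simp add: ext3_def)

lemma tlift_tassoc_tsr:
  "tassoc (tsr x q) = tlift (\<lambda>y z. tsr (tsr x y) z) q"
  unfolding tassoc_def by (rule tlift_tsr) auto

locale coalg =
  fixes \<Delta> :: "('c,'k::field) vec \<Rightarrow> ('c \<times> 'c,'k) vec" and \<epsilon> :: "('c,'k) vec \<Rightarrow> 'k"
  assumes coalg: "coalgebra \<Delta> \<epsilon>"
begin

lemma lin_D: "lin \<Delta>" and linf_e: "linf \<epsilon>"
  using coalg by (auto simp: coalgebra_def)

lemma lin_D_fun[intro!]: "lin g \<Longrightarrow> lin (\<lambda>x. \<Delta> (g x))"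
  using lin_D by (simp add: lin_def)
lemma lin_e_fun[intro!]: "lin g \<Longrightarrow> lin (\<lambda>x. sc (\<epsilon> (g x)) v)"
  using linf_e by (rule lin_scf_fun)

lemma coassoc: "tlift (\<lambda>x y. tsr (\<Delta> x) y) (\<Delta> c) = tassoc (tlift (\<lambda>x y. tsr x (\<Delta> y)) (\<Delta> c))"
  using coalg by (simp add: coalgebra_def)

lemma counit1: "tlift (\<lambda>x y. sc (\<epsilon> x) y) (\<Delta> c) = c"
  using coalg by (simp add: coalgebra_def)
lemma counit2: "tlift (\<lambda>x y. sc (\<epsilon> y) x) (\<Delta> c) = c"
  using coalg by (simp add: coalgebra_def)

lemma counitL: "lin g \<Longrightarrow> tlift (\<lambda>x y. sc (\<epsilon> x) (g y)) (\<Delta> c) = g c"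
  using tlift_comp[of g "\<lambda>x y. sc (\<epsilon> x) y" "\<Delta> c"] by (simp add: counit1 linD)
lemma counitR: "lin g \<Longrightarrow> tlift (\<lambda>x y. sc (\<epsilon> y) (g x)) (\<Delta> c) = g c"
  using tlift_comp[of g "\<lambda>x y. sc (\<epsilon> y) x" "\<Delta> c"] by (simp add: counit2 linD)

lemma CA_trilin:
  assumes T: "trilin T"
  shows "tlift (\<lambda>x y. tlift (\<lambda>x1 x2. T x1 x2 y) (\<Delta> x)) (\<Delta> c) =
         tlift (\<lambda>x y. tlift (\<lambda>y1 y2. T x y1 y2) (\<Delta> y)) (\<Delta> c)"
proof -
  have Tl1: "lin (\<lambda>x. T x y z)" and Tl2: "lin (\<lambda>y. T x y z)" and Tl3: "lin (T x y)" for x y z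
    using T by (auto simp: trilin_def)
  define \<Phi> where "\<Phi> w = tlift (\<lambda>p z. tlift (\<lambda>x y. T x y z) p) w" for w
  have bl: "bilin (\<lambda>p z. tlift (\<lambda>x y. T x y z) p)"
    by (intro bilinI lin_tlift_arg lin_tlift_param lin_id) (use Tl3 in \<open>simp add: lin_def\<close>)
  have "\<Phi> (tlift (\<lambda>x y. tsr (\<Delta> x) y) (\<Delta> c)) = tlift (\<lambda>x y. \<Phi> (tsr (\<Delta> x) y)) (\<Delta> c)"
    unfolding \<Phi>_def by (rule tlift_comp) simp
  also have "\<dots> = tlift (\<lambda>x y. tlift (\<lambda>x1 x2. T x1 x2 y) (\<Delta> x)) (\<Delta> c)"
    unfolding \<Phi>_def by (simp add: tlift_tsr[OF bl])
  finally have L: "\<Phi> (tlift (\<lambda>x y. tsr (\<Delta> x) y) (\<Delta> c)) = tlift (\<lambda>x y. tlift (\<lambda>x1 x2. T x1 x2 y) (\<Delta> x)) (\<Delta> c)" .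
  have bl2: "bilin (\<lambda>x' y'. T x' y' z)" for z using Tl1 Tl2 by (intro bilinI) auto
  have "\<Phi> (tassoc (tlift (\<lambda>x y. tsr x (\<Delta> y)) (\<Delta> c))) = tlift (\<lambda>x y. \<Phi> (tassoc (tsr x (\<Delta> y)))) (\<Delta> c)"
    unfolding \<Phi>_def tassoc_def by (simp add: tlift_comp)
  also have "\<dots> = tlift (\<lambda>x y. tlift (\<lambda>y1 y2. \<Phi> (tsr (tsr x y1) y2)) (\<Delta> y)) (\<Delta> c)"
    unfolding tlift_tassoc_tsr \<Phi>_def by (simp add: tlift_comp)
  also have "\<dots> = tlift (\<lambda>x y. tlift (\<lambda>y1 y2. T x y1 y2) (\<Delta> y)) (\<Delta> c)"
    unfolding \<Phi>_def by (simp add: tlift_tsr[OF bl] tlift_tsr[OF bl2])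
  finally show ?thesis using L coassoc by simp
qed

lemma CA: "tlift (\<lambda>x y. tlift (\<lambda>x1 x2. T x1 x2 y) (\<Delta> x)) (\<Delta> c) =
         tlift (\<lambda>x y. tlift (\<lambda>y1 y2. T x y1 y2) (\<Delta> y)) (\<Delta> c)"
proof -
  have "tlift (\<lambda>x y. tlift (\<lambda>x1 x2. T x1 x2 y) (\<Delta> x)) (\<Delta> c) =
        tlift (\<lambda>x y. tlift (\<lambda>x1 x2. ext3 T x1 x2 y) (\<Delta> x)) (\<Delta> c)"
    by (intro tlift_basis_cong) simp
  also have "\<dots> = tlift (\<lambda>x y. tlift (\<lambda>y1 y2. ext3 T x y1 y2) (\<Delta> y)) (\<Delta> c)"
    by (rule CA_trilin[OF trilin_ext3])
  also have "\<dots> = tlift (\<lambda>x y. tlift (\<lambda>y1 y2. T x y1 y2) (\<Delta> y)) (\<Delta> c)"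
    by (intro tlift_basis_cong) simp
  finally show ?thesis .
qed

end




locale HG = C: coalg \<Delta> \<epsilon> + H: coalg \<Delta>H \<epsilon>H
  for \<Delta> :: "('c,'k::field) vec \<Rightarrow> ('c \<times> 'c,'k) vec" and \<epsilon>
  and \<Delta>H :: "('h,'k::field) vec \<Rightarrow> ('h \<times> 'h,'k) vec" and \<epsilon>H +
  fixes m :: "('h,'k) vec \<Rightarrow> ('h,'k) vec \<Rightarrow> ('h,'k) vec" and u S
    and act :: "('c,'k) vec \<Rightarrow> ('h,'k) vec \<Rightarrow> ('c,'k) vec"
  assumes Hopf: "hopf_algebra m u \<Delta>H \<epsilon>H S"
    and Gal: "hopf_galois_coobject m u \<Delta>H \<epsilon>H \<Delta> \<epsilon> act"
begin

abbreviation "can \<equiv> can_map \<Delta> act"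
abbreviation "\<tau> \<equiv> cotrans \<Delta> \<epsilon> act"

lemma bilin_m: "bilin m" and m_assoc: "m (m x y) z = m x (m y z)"
  and m_u1[simp]: "m u x = x" and m_u2[simp]: "m x u = x"
  and DH_m: "\<Delta>H (m g h) = tlift (\<lambda>a b. tlift (\<lambda>c d. tsr (m a c) (m b d)) (\<Delta>H h)) (\<Delta>H g)"
  and DH_u: "\<Delta>H u = tsr u u"
  and eH_m: "\<epsilon>H (m g h) = \<epsilon>H g * \<epsilon>H h" and eH_u[simp]: "\<epsilon>H u = 1"
  and lin_S: "lin S"
  and antip1: "tlift (\<lambda>x y. m (S x) y) (\<Delta>H h) = sc (\<epsilon>H h) u"
  and antip2: "tlift (\<lambda>x y. m x (S y)) (\<Delta>H h) = sc (\<epsilon>H h) u"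
  using Hopf by (auto simp: hopf_algebra_def)

lemma bilin_act: "bilin act" and act_u[simp]: "act c u = c"
  and act_act: "act (act c h) g = act c (m h g)"
  and D_act: "\<Delta> (act c h) = tlift (\<lambda>c1 c2. tlift (\<lambda>h1 h2. tsr (act c1 h1) (act c2 h2)) (\<Delta>H h)) (\<Delta> c)"
  and e_act: "\<epsilon> (act c h) = \<epsilon> c * \<epsilon>H h"
  and bij_can: "bij can"
  using Gal by (auto simp: hopf_galois_coobject_def module_coalgebra_def)

lemma lin_m1[intro!]: "lin g \<Longrightarrow> lin (\<lambda>x. m (g x) y)"
  using bilin_m by (auto simp: bilin_def lin_def)
lemma lin_m2[intro!]: "lin g \<Longrightarrow> lin (\<lambda>x. m y (g x))"
  using bilin_m by (auto simp: bilin_def lin_def)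
lemma lin_act1[intro!]: "lin g \<Longrightarrow> lin (\<lambda>x. act (g x) h)"
  using bilin_act by (auto simp: bilin_def lin_def)
lemma lin_act2[intro!]: "lin g \<Longrightarrow> lin (\<lambda>x. act c (g x))"
  using bilin_act by (auto simp: bilin_def lin_def)
lemma lin_S_fun[intro!]: "lin g \<Longrightarrow> lin (\<lambda>x. S (g x))"
  using lin_S by (auto simp: lin_def)

lemma lin_can: "lin can"
  unfolding can_map_def by simp

lemma can_tsr: "can (tsr c h) = tlift (\<lambda>x y. tsr x (act y h)) (\<Delta> c)"
  unfolding can_map_def by (rule tlift_tsr) auto

lemma lin_inv_can: "lin (inv can)"
proof -
  have inj: "inj can" and surj: "surj can" using bij_can by (auto simp: bij_def)
  have ci: "can (inv can x) = x" for x using surj by (simp add: surj_f_inv_f)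
  have "inv can (x + y) = inv can x + inv can y" for x y
    using ci[of "x+y"] ci[of x] ci[of y] linD(1)[OF lin_can, of "inv can x" "inv can y"] inj
    by (metis injD)
  moreover have "inv can (sc c x) = sc c (inv can x)" for c x
    using ci[of "sc c x"] ci[of x] linD(2)[OF lin_can, of c "inv can x"] inj
    by (metis injD)
  ultimately show ?thesis by (simp add: lin_def)
qed

lemma inv_can_can[simp]: "inv can (can s) = s"
  using bij_can by (simp add: bij_def)
lemma can_inv_can[simp]: "can (inv can t) = t"
  using bij_can by (simp add: bij_def surj_f_inv_f)

lemma lin_tau: "lin \<tau>"
proof -
  have "\<tau> = (\<lambda>t. tlift (\<lambda>c h. sc (\<epsilon> c) h) (inv can t))"
    by (simp add: cotrans_def[abs_def])
  then show ?thesis using lin_tlift_arg[OF lin_inv_can] by simp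
qed

lemma lin_tau_fun[intro!]: "lin g \<Longrightarrow> lin (\<lambda>x. \<tau> (g x))"
  using lin_tau by (simp add: lin_def)
lemma lin_can_fun[intro!]: "lin g \<Longrightarrow> lin (\<lambda>x. can (g x))"
  using lin_can by (simp add: lin_def)

lemma can_ext:
  assumes "lin F" "lin G" "\<And>c h. F (can (tsr c h)) = G (can (tsr c h))"
  shows "F t = G t"
proof -
  have "(\<lambda>s. F (can s)) = (\<lambda>s. G (can s))"
    by (rule lin_eqI2) (use assms in \<open>auto intro: lin_compose[OF _ lin_can]\<close>)
  then have "F (can (inv can t)) = G (can (inv can t))" by metis
  then show ?thesis by simp
qed

lemma tau_can: "\<tau> (can t) = tlift (\<lambda>c h. sc (\<epsilon> c) h) t"
  by (simp add: cotrans_def)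

lemma T1: "tlift (\<lambda>x y. \<tau> (tsr x (act y h))) (\<Delta> c) = sc (\<epsilon> c) h"
proof -
  have "tlift (\<lambda>x y. \<tau> (tsr x (act y h))) (\<Delta> c) = \<tau> (can (tsr c h))"
    by (simp add: can_tsr tlift_comp[OF lin_tau])
  also have "\<dots> = sc (\<epsilon> c) h"
    by (simp add: tau_can) (rule tlift_tsr, auto)
  finally show ?thesis .
qed

definition "psi t = tlift (\<lambda>c d. tlift (\<lambda>c1 c2. tsr c1 (\<tau> (tsr c2 d))) (\<Delta> c)) t"

lemma psi_tsr: "psi (tsr c d) = tlift (\<lambda>c1 c2. tsr c1 (\<tau> (tsr c2 d))) (\<Delta> c)"
  unfolding psi_def by (rule tlift_tsr) auto

lemma psi_can: "psi (can s) = s"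
proof -
  have "(\<lambda>s. psi (can s)) = (\<lambda>s. s)"
  proof (rule lin_eqI2)
    show "lin (\<lambda>s. psi (can s))" unfolding psi_def by auto
    show "lin (\<lambda>s. s)" by auto
    fix c h
    have "psi (can (tsr c h)) = tlift (\<lambda>x y. psi (tsr x (act y h))) (\<Delta> c)"
      unfolding can_tsr psi_def by (rule tlift_comp) simp
    also have "\<dots> = tlift (\<lambda>x y. tlift (\<lambda>x1 x2. tsr x1 (\<tau> (tsr x2 (act y h)))) (\<Delta> x)) (\<Delta> c)"
      by (simp add: psi_tsr)
    also have "\<dots> = tlift (\<lambda>x y. tlift (\<lambda>y1 y2. tsr x (\<tau> (tsr y1 (act y2 h)))) (\<Delta> y)) (\<Delta> c)"
      by (rule C.CA)
    also have "\<dots> = tlift (\<lambda>x y. tsr x (tlift (\<lambda>y1 y2. \<tau> (tsr y1 (act y2 h))) (\<Delta> y))) (\<Delta> c)"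
      by (rule tlift_cong) (rule tlift_comp[symmetric], auto)
    also have "\<dots> = tlift (\<lambda>x y. sc (\<epsilon> y) (tsr x h)) (\<Delta> c)"
      by (simp add: T1 tsr_sc_right)
    also have "\<dots> = tsr c h"
      by (rule C.counitR) auto
    finally show "psi (can (tsr c h)) = tsr c h" .
  qed
  then show ?thesis by metis
qed

lemma inv_can_psi: "inv can t = psi t"
  using psi_can[of "inv can t"] by simp

lemma can_psi[simp]: "can (psi t) = t"
  by (simp flip: inv_can_psi)

lemma epsid_can: "tlift (\<lambda>x y. sc (\<epsilon> x) y) (can s) = tlift act s"
proof -
  have "(\<lambda>s. tlift (\<lambda>x y. sc (\<epsilon> x) y) (can s)) = tlift act"
  proof (rule lin_eqI2)
    show "lin (\<lambda>s. tlift (\<lambda>x y. sc (\<epsilon> x) y) (can s))" by auto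
    show "lin (tlift act)" by simp
    fix c h
    have "tlift (\<lambda>x y. sc (\<epsilon> x) y) (can (tsr c h)) = tlift (\<lambda>x y. tlift (\<lambda>x y. sc (\<epsilon> x) y) (tsr x (act y h))) (\<Delta> c)"
      unfolding can_tsr by (rule tlift_comp) simp
    also have "\<dots> = tlift (\<lambda>x y. sc (\<epsilon> x) (act y h)) (\<Delta> c)"
      by (rule tlift_cong) (rule tlift_tsr, auto)
    also have "\<dots> = act c h" by (rule C.counitL) auto
    also have "\<dots> = tlift act (tsr c h)" by (rule tlift_tsr[symmetric]) (rule bilin_act)
    finally show "tlift (\<lambda>x y. sc (\<epsilon> x) y) (can (tsr c h)) = tlift act (tsr c h)" .
  qed
  then show ?thesis by metis
qed

lemma T2: "tlift (\<lambda>x y. act x (\<tau> (tsr y d))) (\<Delta> c) = sc (\<epsilon> c) d"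
proof -
  have "tlift (\<lambda>x y. act x (\<tau> (tsr y d))) (\<Delta> c) = tlift act (psi (tsr c d))"
    unfolding psi_tsr tlift_comp[OF lin_tlift]
    by (rule tlift_cong) (rule tlift_tsr[symmetric], rule bilin_act)
  also have "\<dots> = tlift (\<lambda>x y. sc (\<epsilon> x) y) (can (psi (tsr c d)))"
    by (rule epsid_can[symmetric])
  also have "\<dots> = sc (\<epsilon> c) d" by simp (rule tlift_tsr, auto)
  finally show ?thesis .
qed

lemma tau_surj_ext:
  assumes "lin F" "lin G" "\<And>c h. F (can (tsr c h)) = G (can (tsr c h))"
  shows "F = G"
  using can_ext[OF assms] by auto

lemma T3: "\<tau> (tsr a (act b h)) = m (\<tau> (tsr a b)) h"
proof -
  have "(\<lambda>t. \<tau> (tlift (\<lambda>a b. tsr a (act b h)) t)) = (\<lambda>t. m (\<tau> t) h)"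
  proof (rule tau_surj_ext)
    show "lin (\<lambda>t. \<tau> (tlift (\<lambda>a b. tsr a (act b h)) t))" by auto
    show "lin (\<lambda>t. m (\<tau> t) h)" by auto
    fix c g
    have "tlift (\<lambda>a b. tsr a (act b h)) (can (tsr c g)) = tlift (\<lambda>x y. tlift (\<lambda>a b. tsr a (act b h)) (tsr x (act y g))) (\<Delta> c)"
      unfolding can_tsr by (rule tlift_comp) simp
    also have "\<dots> = tlift (\<lambda>x y. tsr x (act y (m g h))) (\<Delta> c)"
      by (rule tlift_cong) (subst tlift_tsr, auto simp: act_act)
    also have "\<dots> = can (tsr c (m g h))" by (simp add: can_tsr)
    finally have "\<tau> (tlift (\<lambda>a b. tsr a (act b h)) (can (tsr c g))) = sc (\<epsilon> c) (m g h)"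
      by (simp add: tau_can) (rule tlift_tsr, auto)
    also have "\<dots> = m (sc (\<epsilon> c) g) h" using bilin_m by (simp add: bilin_def lin_def)
    also have "\<dots> = m (\<tau> (can (tsr c g))) h" by (simp add: tau_can) (subst tlift_tsr, auto)
    finally show "\<tau> (tlift (\<lambda>a b. tsr a (act b h)) (can (tsr c g))) = m (\<tau> (can (tsr c g))) h" .
  qed
  then have "\<tau> (tlift (\<lambda>a b. tsr a (act b h)) (tsr a b)) = m (\<tau> (tsr a b)) h" by metis
  then show ?thesis by (subst (asm) tlift_tsr) auto
qed

lemma tau_can_tsr: "\<tau> (can (tsr c h)) = sc (\<epsilon> c) h"
  by (simp add: tau_can) (rule tlift_tsr, auto)

lemma T4: "\<Delta>H (\<tau> (tsr a b)) =
   tlift (\<lambda>a1 a2. tlift (\<lambda>b1 b2. tsr (\<tau> (tsr a2 b1)) (\<tau> (tsr a1 b2))) (\<Delta> b)) (\<Delta> a)"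
proof -
  define \<Phi> where "\<Phi> t = tlift (\<lambda>a b. tlift (\<lambda>a1 a2. tlift (\<lambda>b1 b2. tsr (\<tau> (tsr a2 b1)) (\<tau> (tsr a1 b2))) (\<Delta> b)) (\<Delta> a)) t" for t
  have bl: "bilin (\<lambda>a b. tlift (\<lambda>a1 a2. tlift (\<lambda>b1 b2. tsr (\<tau> (tsr a2 b1)) (\<tau> (tsr a1 b2))) (\<Delta> b)) (\<Delta> a))"
    by auto
  have "(\<lambda>t. \<Delta>H (\<tau> t)) = \<Phi>"
  proof (rule tau_surj_ext)
    show "lin (\<lambda>t. \<Delta>H (\<tau> t))" by auto
    show "lin \<Phi>" unfolding \<Phi>_def[abs_def] by simp
    fix c h
    have "\<Phi> (can (tsr c h)) = tlift (\<lambda>x y. \<Phi> (tsr x (act y h))) (\<Delta> c)"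
      unfolding can_tsr \<Phi>_def by (rule tlift_comp) simp
    also have "\<dots> = tlift (\<lambda>x y. tlift (\<lambda>a1 a2. tlift (\<lambda>b1 b2. tsr (\<tau> (tsr a2 b1)) (\<tau> (tsr a1 b2))) (\<Delta> (act y h))) (\<Delta> x)) (\<Delta> c)"
      unfolding \<Phi>_def by (rule tlift_cong) (rule tlift_tsr[OF bl])
    also have "\<dots> = tlift (\<lambda>x y. tlift (\<lambda>a1 a2. tlift (\<lambda>y1 y2. tlift (\<lambda>h1 h2. tsr (\<tau> (tsr a2 (act y1 h1))) (\<tau> (tsr a1 (act y2 h2)))) (\<Delta>H h)) (\<Delta> y)) (\<Delta> x)) (\<Delta> c)"
      unfolding D_act
      by (intro tlift_cong) (simp add: tlift_comp[OF lin_tlift], intro tlift_cong tlift_tsr, auto)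
    also have "\<dots> = tlift (\<lambda>a1 r. tlift (\<lambda>a2 y. tlift (\<lambda>y1 y2. tlift (\<lambda>h1 h2. tsr (\<tau> (tsr a2 (act y1 h1))) (\<tau> (tsr a1 (act y2 h2)))) (\<Delta>H h)) (\<Delta> y)) (\<Delta> r)) (\<Delta> c)"
      by (rule C.CA)
    also have "\<dots> = tlift (\<lambda>a1 r. tlift (\<lambda>z y2. tlift (\<lambda>a2 y1. tlift (\<lambda>h1 h2. tsr (\<tau> (tsr a2 (act y1 h1))) (\<tau> (tsr a1 (act y2 h2)))) (\<Delta>H h)) (\<Delta> z)) (\<Delta> r)) (\<Delta> c)"
      by (rule tlift_cong, rule C.CA[symmetric])
    also have "\<dots> = tlift (\<lambda>a1 r. tlift (\<lambda>z y2. tlift (\<lambda>h1 h2. tsr (tlift (\<lambda>a2 y1. \<tau> (tsr a2 (act y1 h1))) (\<Delta> z)) (\<tau> (tsr a1 (act y2 h2)))) (\<Delta>H h)) (\<Delta> r)) (\<Delta> c)"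
      by (intro tlift_cong) (subst tlift_swap, intro tlift_cong, rule tlift_comp[symmetric], auto)
    also have "\<dots> = tlift (\<lambda>a1 r. tlift (\<lambda>z y2. sc (\<epsilon> z) (tlift (\<lambda>h1 h2. tsr h1 (\<tau> (tsr a1 (act y2 h2)))) (\<Delta>H h))) (\<Delta> r)) (\<Delta> c)"
      by (simp add: T1 tsr_sc_left tlift_sc_fun)
    also have "\<dots> = tlift (\<lambda>a1 r. tlift (\<lambda>h1 h2. tsr h1 (\<tau> (tsr a1 (act r h2)))) (\<Delta>H h)) (\<Delta> c)"
      by (intro tlift_cong C.counitL) auto
    also have "\<dots> = tlift (\<lambda>h1 h2. tsr h1 (tlift (\<lambda>a1 r. \<tau> (tsr a1 (act r h2))) (\<Delta> c))) (\<Delta>H h)"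
      by (subst tlift_swap, intro tlift_cong, rule tlift_comp[symmetric], auto)
    also have "\<dots> = sc (\<epsilon> c) (tlift (\<lambda>h1 h2. tsr h1 h2) (\<Delta>H h))"
      by (simp add: T1 tsr_sc_right tlift_sc_fun)
    also have "\<dots> = \<Delta>H (\<tau> (can (tsr c h)))"
      by (simp add: tau_can_tsr tlift_tsr_id linD(2)[OF H.lin_D])
    finally show "\<Delta>H (\<tau> (can (tsr c h))) = \<Phi> (can (tsr c h))" by simp
  qed
  then have "\<Delta>H (\<tau> (tsr a b)) = \<Phi> (tsr a b)" by metis
  then show ?thesis unfolding \<Phi>_def by (simp add: tlift_tsr[OF bl])
qed

end



context HG begin

lemma T5: "\<epsilon>H (\<tau> (tsr a b)) = \<epsilon> a * \<epsilon> b"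
proof -
  define v :: "('h,'k) vec" where "v = bv undefined"
  have E: "(\<lambda>t. sc (\<epsilon>H (\<tau> t)) v) = (\<lambda>t. tlift (\<lambda>x y. sc (\<epsilon> x) (sc (\<epsilon> y) v)) t)"
  proof (rule tau_surj_ext)
    show "lin (\<lambda>t. sc (\<epsilon>H (\<tau> t)) v)" by auto
    show "lin (\<lambda>t. tlift (\<lambda>x y. sc (\<epsilon> x) (sc (\<epsilon> y) v)) t)" by (rule lin_tlift_arg[OF lin_id])
    fix c h
    have "tlift (\<lambda>x y. sc (\<epsilon> x) (sc (\<epsilon> y) v)) (can (tsr c h)) = tlift (\<lambda>x y. sc (\<epsilon> x) (sc (\<epsilon> (act y h)) v)) (\<Delta> c)"
      unfolding can_tsr tlift_comp[OF lin_tlift] by (intro tlift_cong tlift_tsr bilinI lin_sc_fun C.lin_e_fun lin_id)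
    also have "\<dots> = sc (\<epsilon> (act c h)) v" by (rule C.counitL) (intro lin_sc_fun C.lin_e_fun lin_act1 lin_id)
    finally show "sc (\<epsilon>H (\<tau> (can (tsr c h)))) v = tlift (\<lambda>x y. sc (\<epsilon> x) (sc (\<epsilon> y) v)) (can (tsr c h))"
      by (simp add: tau_can_tsr e_act linfD(2)[OF H.linf_e])
  qed
  have "sc (\<epsilon>H (\<tau> (tsr a b))) v = sc (\<epsilon> a) (sc (\<epsilon> b) v)"
  proof -
    have "sc (\<epsilon>H (\<tau> (tsr a b))) v = tlift (\<lambda>x y. sc (\<epsilon> x) (sc (\<epsilon> y) v)) (tsr a b)"
      using fun_cong[OF E, of "tsr a b"] by simp
    also have "\<dots> = sc (\<epsilon> a) (sc (\<epsilon> b) v)"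
      by (intro tlift_tsr bilinI lin_sc_fun C.lin_e_fun lin_id)
    finally show ?thesis .
  qed
  then have "sc (\<epsilon>H (\<tau> (tsr a b))) (bv undefined) = sc (\<epsilon> a * \<epsilon> b) (bv undefined :: ('h,'k) vec)"
    by (simp add: v_def)
  then show ?thesis by (rule sc_bv_eq)
qed

lemma Tv: "tlift (\<lambda>x y. m (\<tau> (tsr b x)) (\<tau> (tsr y d))) (\<Delta> c) = sc (\<epsilon> c) (\<tau> (tsr b d))"
proof -
  have "tlift (\<lambda>x y. m (\<tau> (tsr b x)) (\<tau> (tsr y d))) (\<Delta> c) = tlift (\<lambda>x y. \<tau> (tsr b (act x (\<tau> (tsr y d))))) (\<Delta> c)"
    by (simp add: T3)
  also have "\<dots> = \<tau> (tsr b (tlift (\<lambda>x y. act x (\<tau> (tsr y d))) (\<Delta> c)))"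
    by (rule tlift_comp[symmetric]) auto
  also have "\<dots> = sc (\<epsilon> c) (\<tau> (tsr b d))"
    by (simp add: T2 tsr_sc_right linD(2)[OF lin_tau])
  finally show ?thesis .
qed

lemma T6K: "tlift (\<lambda>x y. tsr (act x h) (act y g)) (\<Delta> c) = tlift (\<lambda>h1 h2. can (tsr (act c h1) (m (S h2) g))) (\<Delta>H h)"
proof -
  have "tlift (\<lambda>h1 h2. can (tsr (act c h1) (m (S h2) g))) (\<Delta>H h)
     = tlift (\<lambda>h1 h2. tlift (\<lambda>x y. tlift (\<lambda>k1 k2. tsr (act x k1) (act (act y k2) (m (S h2) g))) (\<Delta>H h1)) (\<Delta> c)) (\<Delta>H h)"
    unfolding can_tsr D_act
    by (intro tlift_cong) (simp add: tlift_comp[OF lin_tlift], intro tlift_cong tlift_tsr, auto)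
  also have "\<dots> = tlift (\<lambda>x y. tlift (\<lambda>h1 h2. tlift (\<lambda>k1 k2. tsr (act x k1) (act y (m (m k2 (S h2)) g))) (\<Delta>H h1)) (\<Delta>H h)) (\<Delta> c)"
    by (subst tlift_swap) (simp add: act_act m_assoc)
  also have "\<dots> = tlift (\<lambda>x y. tlift (\<lambda>k1 r. tlift (\<lambda>k2 h2. tsr (act x k1) (act y (m (m k2 (S h2)) g))) (\<Delta>H r)) (\<Delta>H h)) (\<Delta> c)"
    by (intro tlift_cong H.CA)
  also have "\<dots> = tlift (\<lambda>x y. tlift (\<lambda>k1 r. tsr (act x k1) (act y (m (tlift (\<lambda>k2 h2. m k2 (S h2)) (\<Delta>H r)) g))) (\<Delta>H h)) (\<Delta> c)"
    by (intro tlift_cong) (rule tlift_comp[symmetric], auto)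
  also have "\<dots> = tlift (\<lambda>x y. tlift (\<lambda>k1 r. sc (\<epsilon>H r) (tsr (act x k1) (act y g))) (\<Delta>H h)) (\<Delta> c)"
    using bilin_m bilin_act by (simp add: antip2 bilin_def lin_def tsr_sc_right)
  also have "\<dots> = tlift (\<lambda>x y. tsr (act x h) (act y g)) (\<Delta> c)"
    by (intro tlift_cong H.counitR) auto
  finally show ?thesis by simp
qed

lemma T6: "\<tau> (tsr (act a h) b) = m (S h) (\<tau> (tsr a b))"
proof -
  have "(\<lambda>t. \<tau> (tlift (\<lambda>a b. tsr (act a h) b) t)) = (\<lambda>t. m (S h) (\<tau> t))"
  proof (rule tau_surj_ext)
    show "lin (\<lambda>t. \<tau> (tlift (\<lambda>a b. tsr (act a h) b) t))" by auto
    show "lin (\<lambda>t. m (S h) (\<tau> t))" by auto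
    fix c g
    have "\<tau> (tlift (\<lambda>a b. tsr (act a h) b) (can (tsr c g))) = \<tau> (tlift (\<lambda>x y. tsr (act x h) (act y g)) (\<Delta> c))"
      unfolding can_tsr tlift_comp[OF lin_tlift] by (intro arg_cong[where f=\<tau>] tlift_cong tlift_tsr) auto
    also have "\<dots> = tlift (\<lambda>h1 h2. sc (\<epsilon> c) (sc (\<epsilon>H h1) (m (S h2) g))) (\<Delta>H h)"
      by (simp add: T6K tlift_comp[OF lin_tau] tau_can_tsr e_act)
    also have "\<dots> = sc (\<epsilon> c) (m (S h) g)"
      unfolding tlift_sc_fun by (rule arg_cong[where f="sc _"], rule H.counitL, auto)
    also have "\<dots> = m (S h) (\<tau> (can (tsr c g)))"
      using bilin_m by (simp add: tau_can_tsr bilin_def lin_def)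
    finally show "\<tau> (tlift (\<lambda>a b. tsr (act a h) b) (can (tsr c g))) = m (S h) (\<tau> (can (tsr c g)))" .
  qed
  then have "\<tau> (tlift (\<lambda>a b. tsr (act a h) b) (tsr a b)) = m (S h) (\<tau> (tsr a b))" by metis
  then show ?thesis by (subst (asm) tlift_tsr) auto
qed

lemma T7: "tlift (\<lambda>c1 c2. tlift (\<lambda>b1 b2. m (\<tau> (tsr c2 b1)) (S (\<tau> (tsr c1 b2)))) (\<Delta> b)) (\<Delta> c) = sc (\<epsilon> c * \<epsilon> b) u"
proof -
  have "sc (\<epsilon> c * \<epsilon> b) u = tlift (\<lambda>x y. m x (S y)) (\<Delta>H (\<tau> (tsr c b)))"
    by (simp add: antip2 T5)
  also have "\<dots> = tlift (\<lambda>c1 c2. tlift (\<lambda>b1 b2. m (\<tau> (tsr c2 b1)) (S (\<tau> (tsr c1 b2)))) (\<Delta> b)) (\<Delta> c)"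
    unfolding T4 by (simp add: tlift_comp[OF lin_tlift]) (intro tlift_cong tlift_tsr, auto)
  finally show ?thesis by simp
qed

lemma T7': "tlift (\<lambda>c1 c2. tlift (\<lambda>b1 b2. m (S (\<tau> (tsr c2 b1))) (\<tau> (tsr c1 b2))) (\<Delta> b)) (\<Delta> c) = sc (\<epsilon> c * \<epsilon> b) u"
proof -
  have "sc (\<epsilon> c * \<epsilon> b) u = tlift (\<lambda>x y. m (S x) y) (\<Delta>H (\<tau> (tsr c b)))"
    by (simp add: antip1 T5)
  also have "\<dots> = tlift (\<lambda>c1 c2. tlift (\<lambda>b1 b2. m (S (\<tau> (tsr c2 b1))) (\<tau> (tsr c1 b2))) (\<Delta> b)) (\<Delta> c)"
    unfolding T4 by (simp add: tlift_comp[OF lin_tlift]) (intro tlift_cong tlift_tsr, auto)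
  finally show ?thesis by simp
qed

abbreviation "chi \<equiv> (\<lambda>a b c. act a (\<tau> (tsr b c)))"

lemma heap: "hopf_heap \<Delta> \<epsilon> chi"
  unfolding hopf_heap_def
proof (intro conjI allI)
  show "coalgebra \<Delta> \<epsilon>" by (rule C.coalg)
  show "trilin chi" by auto
  fix a b c
  show "\<Delta> (chi a b c) = tlift (\<lambda>a1 a2. tlift (\<lambda>b1 b2. tlift (\<lambda>c1 c2. tsr (chi a1 b2 c1) (chi a2 b1 c2)) (\<Delta> c)) (\<Delta> b)) (\<Delta> a)"
    unfolding D_act T4
    by (intro tlift_cong) (simp add: tlift_comp[OF lin_tlift], intro tlift_cong tlift_tsr, auto)
  show "\<epsilon> (chi a b c) = \<epsilon> a * \<epsilon> b * \<epsilon> c"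
    by (simp add: e_act T5 mult.assoc)
  fix d e
  show "chi (chi a b c) d e = chi a b (chi c d e)"
    by (simp add: act_act T3)
next
  fix a c
  show "tlift (\<lambda>c1 c2. chi c1 c2 a) (\<Delta> c) = sc (\<epsilon> c) a" by (rule T2)
  have "tlift (\<lambda>c1 c2. chi a c1 c2) (\<Delta> c) = act a (\<tau> (tlift (\<lambda>x y. tsr x y) (\<Delta> c)))"
    by (rule tlift_comp[of "\<lambda>w. act a (\<tau> w)" "\<lambda>x y. tsr x y", symmetric]) auto
  also have "tlift (\<lambda>x y. tsr x y) (\<Delta> c) = can (tsr c u)" by (simp add: can_tsr)
  finally show "tlift (\<lambda>c1 c2. chi a c1 c2) (\<Delta> c) = sc (\<epsilon> c) a"
    using bilin_act by (simp add: tau_can_tsr bilin_def lin_def)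
qed

end



context HG begin

definition theta where
  "theta c = tlift (\<lambda>x c3. tlift (\<lambda>c1 c2. act c1 (S (\<tau> (tsr c3 c2)))) (\<Delta> x)) (\<Delta> c)"

lemma lin_theta: "lin theta"
proof -
  have "theta = (\<lambda>c. tlift (\<lambda>x c3. tlift (\<lambda>c1 c2. act c1 (S (\<tau> (tsr c3 c2)))) (\<Delta> x)) (\<Delta> c))"
    by (simp add: theta_def[abs_def])
  then show ?thesis using lin_tlift_arg[OF C.lin_D] by simp
qed

lemma lin_theta_fun[intro!]: "lin g \<Longrightarrow> lin (\<lambda>x. theta (g x))"
  using lin_theta by (simp add: lin_def)

lemma Gf_exp: "\<tau> (tsr b (theta c)) = tlift (\<lambda>c1 r. tlift (\<lambda>c2 c3. m (\<tau> (tsr b c1)) (S (\<tau> (tsr c3 c2)))) (\<Delta> r)) (\<Delta> c)"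
proof -
  have "\<tau> (tsr b (theta c)) = tlift (\<lambda>x c3. tlift (\<lambda>c1 c2. \<tau> (tsr b (act c1 (S (\<tau> (tsr c3 c2)))))) (\<Delta> x)) (\<Delta> c)"
    unfolding theta_def
    by (subst tlift_comp[of "\<lambda>w. \<tau> (tsr b w)"], force, rule tlift_cong, rule tlift_comp, force)
  also have "\<dots> = tlift (\<lambda>x c3. tlift (\<lambda>c1 c2. m (\<tau> (tsr b c1)) (S (\<tau> (tsr c3 c2)))) (\<Delta> x)) (\<Delta> c)"
    by (simp add: T3)
  also have "\<dots> = tlift (\<lambda>c1 r. tlift (\<lambda>c2 c3. m (\<tau> (tsr b c1)) (S (\<tau> (tsr c3 c2)))) (\<Delta> r)) (\<Delta> c)"
    by (rule C.CA)
  finally show ?thesis .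
qed

lemma TG: "tlift (\<lambda>x1 x2. \<tau> (tsr x2 (theta x1))) (\<Delta> x) = sc (\<epsilon> x) u"
proof -
  have "tlift (\<lambda>x1 x2. \<tau> (tsr x2 (theta x1))) (\<Delta> x) =
     tlift (\<lambda>x1 x2. tlift (\<lambda>a r. tlift (\<lambda>b c'. m (\<tau> (tsr x2 a)) (S (\<tau> (tsr c' b)))) (\<Delta> r)) (\<Delta> x1)) (\<Delta> x)"
    by (simp add: Gf_exp)
  also have "\<dots> = tlift (\<lambda>x1 x2. tlift (\<lambda>p c'. tlift (\<lambda>a b. m (\<tau> (tsr x2 a)) (S (\<tau> (tsr c' b)))) (\<Delta> p)) (\<Delta> x1)) (\<Delta> x)"
    by (rule tlift_cong, rule C.CA[symmetric])
  also have "\<dots> = tlift (\<lambda>p s. tlift (\<lambda>c' x2. tlift (\<lambda>a b. m (\<tau> (tsr x2 a)) (S (\<tau> (tsr c' b)))) (\<Delta> p)) (\<Delta> s)) (\<Delta> x)"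
    by (rule C.CA)
  also have "\<dots> = tlift (\<lambda>p s. sc (\<epsilon> p) (sc (\<epsilon> s) u)) (\<Delta> x)"
    by (simp add: T7 mult.commute)
  also have "\<dots> = sc (\<epsilon> x) u"
    by (rule C.counitL) (intro lin_sc_fun C.lin_e_fun lin_id)
  finally show ?thesis .
qed

lemma FG: "tlift (\<lambda>x1 x2. tlift (\<lambda>y1 y2. m (\<tau> (tsr x2 y1)) (\<tau> (tsr y2 (theta x1)))) (\<Delta> y)) (\<Delta> x) = sc (\<epsilon> x * \<epsilon> y) u"
  by (simp add: Tv tlift_sc_fun TG mult.commute)

lemma SF: "S (\<tau> (tsr c b)) = \<tau> (tsr b (theta c))"
proof -
  have m_sc: "m x (sc k y) = sc k (m x y)" for x y k using bilin_m by (simp add: bilin_def lin_def)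
  have "S (\<tau> (tsr c b)) = tlift (\<lambda>c1 c2. sc (\<epsilon> c1) (tlift (\<lambda>b1 b2. sc (\<epsilon> b2) (S (\<tau> (tsr c2 b1)))) (\<Delta> b))) (\<Delta> c)"
    by (subst C.counitR, force, subst C.counitL, force, rule refl)
  also have "\<dots> = tlift (\<lambda>c1 c2. tlift (\<lambda>b1 b2. m (S (\<tau> (tsr c2 b1))) (sc (\<epsilon> c1 * \<epsilon> b2) u)) (\<Delta> b)) (\<Delta> c)"
    by (simp add: m_sc tlift_sc_fun[symmetric] mult.commute)
  also have "\<dots> = tlift (\<lambda>c1 c2. tlift (\<lambda>b1 b2. m (S (\<tau> (tsr c2 b1)))
       (tlift (\<lambda>q1 q2. tlift (\<lambda>r1 r2. m (\<tau> (tsr q2 r1)) (\<tau> (tsr r2 (theta q1)))) (\<Delta> b2)) (\<Delta> c1))) (\<Delta> b)) (\<Delta> c)"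
    by (simp add: FG)
  also have "\<dots> = tlift (\<lambda>c1 c2. tlift (\<lambda>b1 b2. tlift (\<lambda>q1 q2. tlift (\<lambda>r1 r2.
        m (m (S (\<tau> (tsr c2 b1))) (\<tau> (tsr q2 r1))) (\<tau> (tsr r2 (theta q1)))) (\<Delta> b2)) (\<Delta> c1)) (\<Delta> b)) (\<Delta> c)"
    by (intro tlift_cong) (subst tlift_comp, force, rule tlift_cong, subst tlift_comp, force, simp add: m_assoc)
  also have "\<dots> = tlift (\<lambda>c1 c2. tlift (\<lambda>q1 q2. tlift (\<lambda>b1 b2. tlift (\<lambda>r1 r2.
        m (m (S (\<tau> (tsr c2 b1))) (\<tau> (tsr q2 r1))) (\<tau> (tsr r2 (theta q1)))) (\<Delta> b2)) (\<Delta> b)) (\<Delta> c1)) (\<Delta> c)"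
    by (intro tlift_cong) (rule tlift_swap)
  also have "\<dots> = tlift (\<lambda>q1 M. tlift (\<lambda>q2 c2. tlift (\<lambda>b1 b2. tlift (\<lambda>r1 r2.
        m (m (S (\<tau> (tsr c2 b1))) (\<tau> (tsr q2 r1))) (\<tau> (tsr r2 (theta q1)))) (\<Delta> b2)) (\<Delta> b)) (\<Delta> M)) (\<Delta> c)"
    by (rule C.CA)
  also have "\<dots> = tlift (\<lambda>q1 M. tlift (\<lambda>q2 c2. tlift (\<lambda>N r2. tlift (\<lambda>b1 r1.
        m (m (S (\<tau> (tsr c2 b1))) (\<tau> (tsr q2 r1))) (\<tau> (tsr r2 (theta q1)))) (\<Delta> N)) (\<Delta> b)) (\<Delta> M)) (\<Delta> c)"
    by (rule tlift_cong, rule tlift_cong, rule C.CA[symmetric])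
  also have "\<dots> = tlift (\<lambda>q1 M. tlift (\<lambda>N r2. tlift (\<lambda>q2 c2. tlift (\<lambda>b1 r1.
        m (m (S (\<tau> (tsr c2 b1))) (\<tau> (tsr q2 r1))) (\<tau> (tsr r2 (theta q1)))) (\<Delta> N)) (\<Delta> M)) (\<Delta> b)) (\<Delta> c)"
    by (intro tlift_cong) (rule tlift_swap)
  also have "\<dots> = tlift (\<lambda>q1 M. tlift (\<lambda>N r2. m (tlift (\<lambda>q2 c2. tlift (\<lambda>b1 r1.
        m (S (\<tau> (tsr c2 b1))) (\<tau> (tsr q2 r1))) (\<Delta> N)) (\<Delta> M)) (\<tau> (tsr r2 (theta q1)))) (\<Delta> b)) (\<Delta> c)"
    by (intro tlift_cong) (subst tlift_comp[of "\<lambda>w. m w _"], force, rule tlift_cong, subst tlift_comp[of "\<lambda>w. m w _"], force, rule refl)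
  also have "\<dots> = tlift (\<lambda>q1 M. tlift (\<lambda>N r2. sc (\<epsilon> M) (sc (\<epsilon> N) (\<tau> (tsr r2 (theta q1))))) (\<Delta> b)) (\<Delta> c)"
    using bilin_m by (simp add: T7' bilin_def lin_def mult.commute)
  also have "\<dots> = tlift (\<lambda>q1 M. sc (\<epsilon> M) (\<tau> (tsr b (theta q1)))) (\<Delta> c)"
    by (intro tlift_cong) (subst tlift_sc_fun, rule arg_cong[where f="sc _"], rule C.counitL, force)
  also have "\<dots> = \<tau> (tsr b (theta c))"
    by (rule C.counitR) force
  finally show ?thesis .
qed

end



context HG begin

lemma grun_id: "chi (chi a b (theta c)) d e = chi a (chi d c b) e"
  by (simp add: act_act T6 SF)

lemma m_sc1: "m (sc k x) y = sc k (m x y)" using bilin_m by (simp add: bilin_def lin_def)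
lemma m_sc2: "m x (sc k y) = sc k (m x y)" using bilin_m by (simp add: bilin_def lin_def)

lemma eH_S: "\<epsilon>H (S h) = \<epsilon>H h"
proof -
  define v :: "('h,'k) vec" where "v = bv undefined"
  have "sc (\<epsilon>H h) v = sc (\<epsilon>H (sc (\<epsilon>H h) u)) v"
    by (simp add: linfD(2)[OF H.linf_e])
  also have "\<dots> = tlift (\<lambda>x y. sc (\<epsilon>H (m (S x) y)) v) (\<Delta>H h)"
    by (simp only: antip1[symmetric] linf_tlift[OF H.linf_e])
  also have "\<dots> = tlift (\<lambda>x y. sc (\<epsilon>H y) (sc (\<epsilon>H (S x)) v)) (\<Delta>H h)"
    by (simp add: eH_m mult.commute)
  also have "\<dots> = sc (\<epsilon>H (S h)) v"
    by (rule H.counitR) (intro H.lin_e_fun lin_S_fun lin_id)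
  finally show ?thesis unfolding v_def by (metis sc_bv_eq)
qed

lemma theta_R: "theta c = tlift (\<lambda>c1 r. tlift (\<lambda>c2 c3. act c1 (S (\<tau> (tsr c3 c2)))) (\<Delta> r)) (\<Delta> c)"
  unfolding theta_def by (rule C.CA)

lemma e_theta: "\<epsilon> (theta c) = \<epsilon> c"
proof -
  define v :: "('c,'k) vec" where "v = bv undefined"
  have "sc (\<epsilon> (theta c)) v = tlift (\<lambda>x c3. tlift (\<lambda>c1 c2. sc (\<epsilon> (act c1 (S (\<tau> (tsr c3 c2))))) v) (\<Delta> x)) (\<Delta> c)"
    unfolding theta_def by (simp only: linf_tlift[OF C.linf_e])
  also have "\<dots> = tlift (\<lambda>x c3. tlift (\<lambda>c1 c2. sc (\<epsilon> c1) (sc (\<epsilon> c2) (sc (\<epsilon> c3) v))) (\<Delta> x)) (\<Delta> c)"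
    by (simp add: e_act eH_S T5 mult.commute mult.left_commute)
  also have "\<dots> = tlift (\<lambda>x c3. sc (\<epsilon> x) (sc (\<epsilon> c3) v)) (\<Delta> c)"
    by (rule tlift_cong, rule C.counitL) (intro lin_sc_fun C.lin_e_fun lin_id)
  also have "\<dots> = sc (\<epsilon> c) v"
    by (rule C.counitL) (intro lin_sc_fun C.lin_e_fun lin_id)
  finally show ?thesis unfolding v_def by (metis sc_bv_eq)
qed

definition M2 where "M2 t t' = tlift (\<lambda>a b. tlift (\<lambda>c d. tsr (m a c) (m b d)) t') t"

lemma lin_M2_1[intro!]: "lin g \<Longrightarrow> lin (\<lambda>x. M2 (g x) t)"
  unfolding M2_def by auto
lemma lin_M2_2[intro!]: "lin g \<Longrightarrow> lin (\<lambda>x. M2 t (g x))"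
  unfolding M2_def by auto

lemma M2_tsr2: "M2 t (tsr c d) = tlift (\<lambda>a b. tsr (m a c) (m b d)) t"
  unfolding M2_def by (intro tlift_cong tlift_tsr) auto
lemma M2_tsr1: "M2 (tsr a b) t = tlift (\<lambda>c d. tsr (m a c) (m b d)) t"
  unfolding M2_def by (rule tlift_tsr) auto
lemma M2_tsr: "M2 (tsr a b) (tsr c d) = tsr (m a c) (m b d)"
  by (simp add: M2_tsr1) (rule tlift_tsr, auto)

lemma M2_assoc: "M2 (M2 s t) w = M2 s (M2 t w)"
proof -
  have "(\<lambda>s. M2 (M2 s t) w) = (\<lambda>s. M2 s (M2 t w))" for t w
  proof (rule lin_eqI2)
    show "lin (\<lambda>s. M2 (M2 s t) w)" "lin (\<lambda>s. M2 s (M2 t w))" by auto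
    fix a b
    have "(\<lambda>t. M2 (M2 (tsr a b) t) w) = (\<lambda>t. M2 (tsr a b) (M2 t w))" for w
    proof (rule lin_eqI2)
      show "lin (\<lambda>t. M2 (M2 (tsr a b) t) w)" "lin (\<lambda>t. M2 (tsr a b) (M2 t w))" by auto
      fix c d
      have "(\<lambda>w. M2 (M2 (tsr a b) (tsr c d)) w) = (\<lambda>w. M2 (tsr a b) (M2 (tsr c d) w))"
      proof (rule lin_eqI2)
        show "lin (\<lambda>w. M2 (M2 (tsr a b) (tsr c d)) w)" "lin (\<lambda>w. M2 (tsr a b) (M2 (tsr c d) w))"
          by (auto intro: lin_tlift_arg simp: M2_def)
        fix e f
        show "M2 (M2 (tsr a b) (tsr c d)) (tsr e f) = M2 (tsr a b) (M2 (tsr c d) (tsr e f))"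
          by (simp add: M2_tsr m_assoc)
      qed
      then show "M2 (M2 (tsr a b) (tsr c d)) w = M2 (tsr a b) (M2 (tsr c d) w)" by metis
    qed
    then show "M2 (M2 (tsr a b) t) w = M2 (tsr a b) (M2 t w)" by metis
  qed
  then show ?thesis by metis
qed

lemma M2_unit1: "M2 (tsr u u) t = t"
  by (simp add: M2_tsr1)

lemma DS_L: "tlift (\<lambda>h1 h2. M2 (\<Delta>H h1) (tlift (\<lambda>x y. tsr (S y) (S x)) (\<Delta>H h2))) (\<Delta>H h) = sc (\<epsilon>H h) (tsr u u)"
proof -
  have "tlift (\<lambda>h1 h2. M2 (\<Delta>H h1) (tlift (\<lambda>x y. tsr (S y) (S x)) (\<Delta>H h2))) (\<Delta>H h)
     = tlift (\<lambda>h1 h2. tlift (\<lambda>a b. tlift (\<lambda>x y. tsr (m a (S y)) (m b (S x))) (\<Delta>H h2)) (\<Delta>H h1)) (\<Delta>H h)"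
    by (intro tlift_cong) (subst tlift_comp, force, simp add: M2_tsr2, rule tlift_swap)
  also have "\<dots> = tlift (\<lambda>a r. tlift (\<lambda>b h2. tlift (\<lambda>x y. tsr (m a (S y)) (m b (S x))) (\<Delta>H h2)) (\<Delta>H r)) (\<Delta>H h)"
    by (rule H.CA)
  also have "\<dots> = tlift (\<lambda>a r. tlift (\<lambda>z y. tlift (\<lambda>b x. tsr (m a (S y)) (m b (S x))) (\<Delta>H z)) (\<Delta>H r)) (\<Delta>H h)"
    by (rule tlift_cong, rule H.CA[symmetric])
  also have "\<dots> = tlift (\<lambda>a r. tlift (\<lambda>z y. sc (\<epsilon>H z) (tsr (m a (S y)) u)) (\<Delta>H r)) (\<Delta>H h)"
    by (intro tlift_cong) (subst tlift_comp[symmetric], force, simp add: antip2 tsr_sc_right)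
  also have "\<dots> = tlift (\<lambda>a r. tsr (m a (S r)) u) (\<Delta>H h)"
    by (intro tlift_cong H.counitL) auto
  also have "\<dots> = tsr (tlift (\<lambda>a r. m a (S r)) (\<Delta>H h)) u"
    by (rule tlift_comp[symmetric]) auto
  finally show ?thesis by (simp add: antip2 tsr_sc_left)
qed

lemma DS_R: "tlift (\<lambda>h1 h2. M2 (\<Delta>H (S h1)) (\<Delta>H h2)) (\<Delta>H h) = sc (\<epsilon>H h) (tsr u u)"
proof -
  have "tlift (\<lambda>h1 h2. M2 (\<Delta>H (S h1)) (\<Delta>H h2)) (\<Delta>H h) = \<Delta>H (tlift (\<lambda>h1 h2. m (S h1) h2) (\<Delta>H h))"
    by (simp add: DH_m M2_def tlift_comp[OF H.lin_D])
  then show ?thesis by (simp add: antip1 linD(2)[OF H.lin_D] DH_u)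
qed

lemma DH_S: "\<Delta>H (S h) = tlift (\<lambda>h1 h2. tsr (S h2) (S h1)) (\<Delta>H h)"
proof -
  define L where "L h = tlift (\<lambda>x y. tsr (S y) (S x)) (\<Delta>H h)" for h
  have linL: "lin L" unfolding L_def[abs_def] by (rule lin_tlift_arg[OF H.lin_D])
  have "\<Delta>H (S h) = tlift (\<lambda>h1 h2. sc (\<epsilon>H h2) (\<Delta>H (S h1))) (\<Delta>H h)"
    by (rule H.counitR[symmetric]) auto
  also have "\<dots> = tlift (\<lambda>h1 h2. M2 (\<Delta>H (S h1)) (sc (\<epsilon>H h2) (tsr u u))) (\<Delta>H h)"
  proof -
    have "M2 t (sc k (tsr u u)) = sc k t" for t k
      using lin_M2_2[OF lin_id, of t] by (simp add: linD(2) M2_tsr2)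
    then show ?thesis by simp
  qed
  also have "\<dots> = tlift (\<lambda>h1 h2. M2 (\<Delta>H (S h1)) (tlift (\<lambda>k1 k2. M2 (\<Delta>H k1) (L k2)) (\<Delta>H h2))) (\<Delta>H h)"
    by (simp add: DS_L L_def)
  also have "\<dots> = tlift (\<lambda>h1 h2. tlift (\<lambda>k1 k2. M2 (M2 (\<Delta>H (S h1)) (\<Delta>H k1)) (L k2)) (\<Delta>H h2)) (\<Delta>H h)"
    by (intro tlift_cong) (subst tlift_comp, force, simp add: M2_assoc)
  also have "\<dots> = tlift (\<lambda>p k2. tlift (\<lambda>h1 k1. M2 (M2 (\<Delta>H (S h1)) (\<Delta>H k1)) (L k2)) (\<Delta>H p)) (\<Delta>H h)"
    by (rule H.CA[symmetric])
  also have "\<dots> = tlift (\<lambda>p k2. M2 (tlift (\<lambda>h1 k1. M2 (\<Delta>H (S h1)) (\<Delta>H k1)) (\<Delta>H p)) (L k2)) (\<Delta>H h)"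
    by (intro tlift_cong) (subst tlift_comp[of "\<lambda>w. M2 w _"], force, rule refl)
  also have "\<dots> = tlift (\<lambda>p k2. sc (\<epsilon>H p) (L k2)) (\<Delta>H h)"
  proof -
    have "M2 (sc k (tsr u u)) t = sc k t" for t k
    proof -
      have l: "lin (\<lambda>x. M2 x t)" by auto
      show ?thesis using linD(2)[OF l, of k "tsr u u"] M2_unit1 by simp
    qed
    then show ?thesis by (simp add: DS_R)
  qed
  also have "\<dots> = L h" by (rule H.counitL[OF linL])
  finally show ?thesis unfolding L_def .
qed

end



context HG begin

lemma DA: "\<Delta> (act c1 (S (\<tau> (tsr c3 c2)))) = tlift (\<lambda>p q. tlift (\<lambda>e1 e2. tlift (\<lambda>f1 f2.
    tsr (act p (S (\<tau> (tsr e1 f2)))) (act q (\<tau> (tsr f1 (theta e2))))) (\<Delta> c2)) (\<Delta> c3)) (\<Delta> c1)"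
proof -
  have "\<Delta>H (S (\<tau> (tsr c3 c2))) = tlift (\<lambda>e1 e2. tlift (\<lambda>f1 f2. tsr (S (\<tau> (tsr e1 f2))) (S (\<tau> (tsr e2 f1)))) (\<Delta> c2)) (\<Delta> c3)"
    unfolding DH_S T4
    by (subst tlift_comp, force, rule tlift_cong, subst tlift_comp, force, rule tlift_cong, rule tlift_tsr, auto)
  then show ?thesis
    unfolding D_act
    by (intro tlift_cong) (simp add: tlift_comp[OF lin_tlift] SF[symmetric], intro tlift_cong tlift_tsr, auto)
qed

lemma D_theta: "\<Delta> (theta c) = tlift (\<lambda>x y. tsr (theta x) (theta y)) (\<Delta> c)"
proof -
  have "\<Delta> (theta c) = tlift (\<lambda>c1 r. tlift (\<lambda>c2 c3. \<Delta> (act c1 (S (\<tau> (tsr c3 c2))))) (\<Delta> r)) (\<Delta> c)"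
    unfolding theta_R by (subst tlift_comp[OF C.lin_D], rule tlift_cong, rule tlift_comp[OF C.lin_D])
  also have "\<dots> = tlift (\<lambda>c1 r. tlift (\<lambda>c2 c3. tlift (\<lambda>p q. tlift (\<lambda>e1 e2. tlift (\<lambda>f1 f2.
    tsr (act p (S (\<tau> (tsr e1 f2)))) (act q (\<tau> (tsr f1 (theta e2))))) (\<Delta> c2)) (\<Delta> c3)) (\<Delta> c1)) (\<Delta> r)) (\<Delta> c)"
    by (simp only: DA)
  also have "\<dots> = tlift (\<lambda>c1 r. tlift (\<lambda>p q. tlift (\<lambda>c2 c3. tlift (\<lambda>e1 e2. tlift (\<lambda>f1 f2.
    tsr (act p (S (\<tau> (tsr e1 f2)))) (act q (\<tau> (tsr f1 (theta e2))))) (\<Delta> c2)) (\<Delta> c3)) (\<Delta> r)) (\<Delta> c1)) (\<Delta> c)"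
    by (rule tlift_cong, rule tlift_swap)
  also have "\<dots> = tlift (\<lambda>p s. tlift (\<lambda>q r. tlift (\<lambda>c2 c3. tlift (\<lambda>e1 e2. tlift (\<lambda>f1 f2.
    tsr (act p (S (\<tau> (tsr e1 f2)))) (act q (\<tau> (tsr f1 (theta e2))))) (\<Delta> c2)) (\<Delta> c3)) (\<Delta> r)) (\<Delta> s)) (\<Delta> c)"
    by (rule C.CA)
  also have "\<dots> = tlift (\<lambda>p s. tlift (\<lambda>z c3. tlift (\<lambda>q c2. tlift (\<lambda>e1 e2. tlift (\<lambda>f1 f2.
    tsr (act p (S (\<tau> (tsr e1 f2)))) (act q (\<tau> (tsr f1 (theta e2))))) (\<Delta> c2)) (\<Delta> c3)) (\<Delta> z)) (\<Delta> s)) (\<Delta> c)"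
    by (rule tlift_cong, rule C.CA[symmetric])
  also have "\<dots> = tlift (\<lambda>p s. tlift (\<lambda>z c3. tlift (\<lambda>e1 e2. tlift (\<lambda>q c2. tlift (\<lambda>f1 f2.
    tsr (act p (S (\<tau> (tsr e1 f2)))) (act q (\<tau> (tsr f1 (theta e2))))) (\<Delta> c2)) (\<Delta> z)) (\<Delta> c3)) (\<Delta> s)) (\<Delta> c)"
    by (rule tlift_cong, rule tlift_cong, rule tlift_swap)
  also have "\<dots> = tlift (\<lambda>p s. tlift (\<lambda>z c3. tlift (\<lambda>e1 e2. tlift (\<lambda>M f2. tlift (\<lambda>q f1.
    tsr (act p (S (\<tau> (tsr e1 f2)))) (act q (\<tau> (tsr f1 (theta e2))))) (\<Delta> M)) (\<Delta> z)) (\<Delta> c3)) (\<Delta> s)) (\<Delta> c)"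
    by (rule tlift_cong, rule tlift_cong, rule tlift_cong, rule C.CA[symmetric])
  also have "\<dots> = tlift (\<lambda>p s. tlift (\<lambda>z c3. tlift (\<lambda>e1 e2. tlift (\<lambda>M f2. sc (\<epsilon> M)
    (tsr (act p (S (\<tau> (tsr e1 f2)))) (theta e2))) (\<Delta> z)) (\<Delta> c3)) (\<Delta> s)) (\<Delta> c)"
  proof -
    have "tlift (\<lambda>q f1. tsr X (act q (\<tau> (tsr f1 Y)))) (\<Delta> M) = sc (\<epsilon> M) (tsr X Y)" for X Y M
    proof -
      have "tlift (\<lambda>q f1. tsr X (act q (\<tau> (tsr f1 Y)))) (\<Delta> M) = tsr X (tlift (\<lambda>q f1. act q (\<tau> (tsr f1 Y))) (\<Delta> M))"
        by (rule tlift_comp[symmetric]) auto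
      then show ?thesis by (simp add: T2 tsr_sc_right)
    qed
    note K = this
    show ?thesis by (intro tlift_cong) (rule K)
  qed
  also have "\<dots> = tlift (\<lambda>p s. tlift (\<lambda>z c3. tlift (\<lambda>e1 e2. tsr (act p (S (\<tau> (tsr e1 z)))) (theta e2)) (\<Delta> c3)) (\<Delta> s)) (\<Delta> c)"
    by (intro tlift_cong) (rule C.counitL, auto)
  also have "\<dots> = tlift (\<lambda>c1 s. tlift (\<lambda>r y2. tlift (\<lambda>c2 c3. tsr (act c1 (S (\<tau> (tsr c3 c2)))) (theta y2)) (\<Delta> r)) (\<Delta> s)) (\<Delta> c)"
    by (rule tlift_cong, rule C.CA[symmetric])
  also have "\<dots> = tlift (\<lambda>y1 y2. tlift (\<lambda>c1 r. tlift (\<lambda>c2 c3. tsr (act c1 (S (\<tau> (tsr c3 c2)))) (theta y2)) (\<Delta> r)) (\<Delta> y1)) (\<Delta> c)"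
    by (rule C.CA[symmetric])
  also have "\<dots> = tlift (\<lambda>x y. tsr (theta x) (theta y)) (\<Delta> c)"
    unfolding theta_R[of "_"]
    by (intro tlift_cong) (subst tlift_comp[of "\<lambda>w. tsr w _"], force, rule tlift_cong, subst tlift_comp[of "\<lambda>w. tsr w _"], force, rule refl)
  finally show ?thesis .
qed

end



lemma module_fsc: "module (fsc :: 'k::field \<Rightarrow> (('c,'k) vec \<Rightarrow> ('c,'k) vec) \<Rightarrow> _)"
  by unfold_locales (auto simp: fsc_def plus_fun_def sc_add_right sc_add_left)

lemma fsc_apply: "fsc c f v = sc c (f v)" by (simp add: fsc_def)

context HG begin

lemma e_exists: "\<exists>e. \<epsilon> e = 1"
proof -
  obtain c :: "('c,'k) vec" where c: "c \<noteq> 0" using C.coalg by (auto simp: coalgebra_def)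
  have "\<exists>v. \<epsilon> v \<noteq> 0"
  proof (rule ccontr)
    assume "\<not> (\<exists>v. \<epsilon> v \<noteq> 0)"
    then have "tlift (\<lambda>x y. sc (\<epsilon> x) y) (\<Delta> c) = tlift (\<lambda>x y. 0) (\<Delta> c)" by simp
    then show False using c C.counit1 by simp
  qed
  then obtain v where v: "\<epsilon> v \<noteq> 0" by blast
  have "\<epsilon> (sc (1 / \<epsilon> v) v) = 1" using v by (simp add: linfD(2)[OF C.linf_e])
  then show ?thesis by blast
qed

definition "rho h = (\<lambda>v. act v h)"

lemma rho_add: "rho (x + y) = rho x + rho y"
  unfolding rho_def using bilin_act by (auto simp: bilin_def lin_def plus_fun_def)
lemma rho_sc: "rho (sc c x) = fsc c (rho x)"
  unfolding rho_def fsc_def using bilin_act by (auto simp: bilin_def lin_def)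
lemma rho_zero: "rho 0 = 0"
  unfolding rho_def using bilin_act by (auto simp: bilin_def lin_zero)

lemma inj_rho: "inj rho"
proof (rule injI)
  fix h g assume hg: "rho h = rho g"
  define d where "d = h - g"
  have ad: "act v d = 0" for v
  proof -
    have "act v d = act v h - act v g" unfolding d_def
      using bilin_act by (simp add: bilin_def lin_minus)
    then show ?thesis using hg by (simp add: rho_def fun_eq_iff)
  qed
  obtain c :: "('c,'k) vec" where c: "c \<noteq> 0" using C.coalg by (auto simp: coalgebra_def)
  have "can (tsr c d) = 0" by (simp add: can_tsr ad)
  also have "\<dots> = can 0" by (simp add: lin_zero[OF lin_can])
  finally have "tsr c d = 0" using bij_can by (simp add: bij_def inj_eq)
  moreover obtain i where i: "lookup c i \<noteq> 0" using c by (metis poly_mapping_eqI lookup_zero)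
  ultimately have "lookup d j = 0" for j
  proof -
    have "lookup (tsr c d) (i, j) = 0" using \<open>tsr c d = 0\<close> by simp
    then have "lookup c i * lookup d j = 0" by simp
    then show ?thesis using i by simp
  qed
  then have "d = 0" by (intro poly_mapping_eqI) simp
  then show "h = g" by (simp add: d_def)
qed

lemma transl_rho: "transl chi a b = rho (\<tau> (tsr a b))"
  by (simp add: transl_def rho_def)

lemma rho_tau_span: "rho (\<tau> t) \<in> Tn chi"
proof -
  have sp: "rho (\<tau> (\<Sum>p\<in>A. sc (lookup t p) (bv p))) \<in> Tn chi" if "finite A" for A
    using that
  proof (induct A rule: finite_induct)
    case empty then show ?case
      using module.span_zero[OF module_fsc] by (simp add: lin_zero[OF lin_tau] rho_zero Tn_def zero_fun_def)
  next
    case (insert p A)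
    obtain i j where p: "p = (i, j)" by (cases p)
    have eq: "rho (\<tau> (\<Sum>p\<in>insert p A. sc (lookup t p) (bv p))) =
          fsc (lookup t p) (transl chi (bv i) (bv j)) + rho (\<tau> (\<Sum>p\<in>A. sc (lookup t p) (bv p)))"
      using insert by (simp add: linD[OF lin_tau] rho_add rho_sc transl_rho p tsr_bv)
    have "fsc (lookup t p) (transl chi (bv i) (bv j)) \<in> Tn chi" unfolding Tn_def
      by (intro module.span_scale[OF module_fsc] module.span_base[OF module_fsc]) blast
    then show ?case unfolding eq using insert(3) unfolding Tn_def
      by (rule module.span_add[OF module_fsc])
  qed
  show ?thesis using sp[of "keys t"] vec_decomp[of t] by simp
qed

lemma Tn_eq: "Tn chi = range rho"
proof
  show "Tn chi \<subseteq> range rho"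
  proof
    fix x assume "x \<in> Tn chi"
    then show "x \<in> range rho" unfolding Tn_def
    proof (rule module.span_induct_alt[OF module_fsc])
      show "0 \<in> range rho" using rho_zero by (metis rangeI)
      fix c x y assume "x \<in> {transl chi a b |a b. True}" "y \<in> range rho"
      then obtain a b g where "x = transl chi a b" "y = rho g" by blast
      then have "fsc c x + y = rho (sc c (\<tau> (tsr a b)) + g)" by (simp add: rho_add rho_sc transl_rho)
      then show "fsc c x + y \<in> range rho" by simp
    qed
  qed
  show "range rho \<subseteq> Tn chi"
  proof
    fix x assume "x \<in> range rho"
    then obtain h where x: "x = rho h" by blast
    obtain e where e: "\<epsilon> e = 1" using e_exists by blast
    have "x = rho (\<tau> (can (tsr e h)))" using x e by (simp add: tau_can_tsr)
    then show "x \<in> Tn chi" using rho_tau_span by simp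
  qed
qed

lemma Tn_part:
  "\<exists>\<phi>. (\<forall>a b. \<phi> (transl chi a b) = \<tau> (tsr a b))
            \<and> (\<forall>x\<in>Tn chi. \<forall>y\<in>Tn chi. \<phi> (x + y) = \<phi> x + \<phi> y)
            \<and> (\<forall>c. \<forall>x\<in>Tn chi. \<phi> (fsc c x) = sc c (\<phi> x))
            \<and> bij_betw \<phi> (Tn chi) UNIV
            \<and> id \<in> Tn chi \<and> \<phi> id = u
            \<and> (\<forall>x\<in>Tn chi. \<forall>y\<in>Tn chi. \<phi> (y \<circ> x) = m (\<phi> x) (\<phi> y))
            \<and> (\<forall>a b. \<Delta>H (\<tau> (tsr a b)) =
                 tlift (\<lambda>a1 a2. tlift (\<lambda>b1 b2. tsr (\<tau> (tsr a2 b1)) (\<tau> (tsr a1 b2))) (\<Delta> b)) (\<Delta> a))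
            \<and> (\<forall>a b. \<epsilon>H (\<tau> (tsr a b)) = \<epsilon> a * \<epsilon> b)
            \<and> (\<forall>e. \<epsilon> e = 1 \<longrightarrow>
                 (\<forall>h. (\<lambda>v. tlift (\<lambda>e1 e2. chi v e1 (act e2 h)) (\<Delta> e)) \<in> Tn chi
                      \<and> \<phi> (\<lambda>v. tlift (\<lambda>e1 e2. chi v e1 (act e2 h)) (\<Delta> e)) = h)
                 \<and> (\<forall>x\<in>Tn chi. (\<lambda>v. tlift (\<lambda>e1 e2. chi v e1 (act e2 (\<phi> x))) (\<Delta> e)) = x))"
proof (intro exI[of _ "inv rho"] conjI allI ballI impI)
  have ir: "inv rho (rho h) = h" for h using inj_rho by simp
  have id_rho: "id = rho u" by (simp add: rho_def fun_eq_iff)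
  fix a b
  show "inv rho (transl chi a b) = \<tau> (tsr a b)" by (simp add: transl_rho ir)
  show "\<Delta>H (\<tau> (tsr a b)) = tlift (\<lambda>a1 a2. tlift (\<lambda>b1 b2. tsr (\<tau> (tsr a2 b1)) (\<tau> (tsr a1 b2))) (\<Delta> b)) (\<Delta> a)"
    by (rule T4)
  show "\<epsilon>H (\<tau> (tsr a b)) = \<epsilon> a * \<epsilon> b" by (rule T5)
next
  have ir: "inv rho (rho h) = h" for h using inj_rho by simp
  fix x y assume "x \<in> Tn chi" "y \<in> Tn chi"
  then obtain hx hy where x: "x = rho hx" and y: "y = rho hy" by (auto simp: Tn_eq)
  show "inv rho (x + y) = inv rho x + inv rho y" by (simp add: x y ir flip: rho_add)
  have "y \<circ> x = rho (m hx hy)" by (simp add: x y rho_def fun_eq_iff act_act)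
  then show "inv rho (y \<circ> x) = m (inv rho x) (inv rho y)" by (simp add: x y ir)
next
  have ir: "inv rho (rho h) = h" for h using inj_rho by simp
  fix c x assume "x \<in> Tn chi"
  then obtain hx where x: "x = rho hx" by (auto simp: Tn_eq)
  show "inv rho (fsc c x) = sc c (inv rho x)" by (simp add: x ir flip: rho_sc)
next
  show "bij_betw (inv rho) (Tn chi) UNIV"
    unfolding Tn_eq using inj_rho by (simp add: bij_betw_inv_into inj_on_imp_bij_betw)
next
  have id_rho: "id = rho u" by (simp add: rho_def fun_eq_iff)
  show "id \<in> Tn chi" by (simp add: Tn_eq id_rho)
  show "inv rho id = u" using inj_rho by (simp add: id_rho)
next
  fix e :: "('c,'k) vec" assume e: "\<epsilon> e = 1"
  have key: "(\<lambda>v. tlift (\<lambda>e1 e2. chi v e1 (act e2 h)) (\<Delta> e)) = rho h" for h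
  proof (rule ext)
    fix v
    have "tlift (\<lambda>e1 e2. chi v e1 (act e2 h)) (\<Delta> e) = act v (\<tau> (can (tsr e h)))"
      unfolding can_tsr by (rule tlift_comp[of "\<lambda>w. act v (\<tau> w)", symmetric]) auto
    then show "tlift (\<lambda>e1 e2. chi v e1 (act e2 h)) (\<Delta> e) = rho h v"
      using e by (simp add: tau_can_tsr rho_def)
  qed
  fix h
  show "(\<lambda>v. tlift (\<lambda>e1 e2. chi v e1 (act e2 h)) (\<Delta> e)) \<in> Tn chi" by (simp add: key Tn_eq)
  show "inv rho (\<lambda>v. tlift (\<lambda>e1 e2. chi v e1 (act e2 h)) (\<Delta> e)) = h" using inj_rho by (simp add: key)
next
  fix e :: "('c,'k) vec" assume e: "\<epsilon> e = 1"
  have key: "(\<lambda>v. tlift (\<lambda>e1 e2. chi v e1 (act e2 h)) (\<Delta> e)) = rho h" for h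
  proof (rule ext)
    fix v
    have "tlift (\<lambda>e1 e2. chi v e1 (act e2 h)) (\<Delta> e) = act v (\<tau> (can (tsr e h)))"
      unfolding can_tsr by (rule tlift_comp[of "\<lambda>w. act v (\<tau> w)", symmetric]) auto
    then show "tlift (\<lambda>e1 e2. chi v e1 (act e2 h)) (\<Delta> e) = rho h v"
      using e by (simp add: tau_can_tsr rho_def)
  qed
  fix x assume "x \<in> Tn chi"
  then obtain hx where x: "x = rho hx" by (auto simp: Tn_eq)
  show "(\<lambda>v. tlift (\<lambda>e1 e2. chi v e1 (act e2 (inv rho x))) (\<Delta> e)) = x"
    using inj_rho by (simp add: key x)
qed

lemma grunspan: "grunspan_map \<Delta> \<epsilon> chi theta"
  unfolding grunspan_map_def coalg_map_def
  using lin_theta D_theta e_theta grun_id by auto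

end

theorem mainTheorem9:
  fixes m :: "('h,'k::field) vec \<Rightarrow> ('h,'k) vec \<Rightarrow> ('h,'k) vec"
    and u :: "('h,'k) vec"
    and \<Delta>H :: "('h,'k) vec \<Rightarrow> ('h \<times> 'h,'k) vec"
    and \<epsilon>H :: "('h,'k) vec \<Rightarrow> 'k"
    and S :: "('h,'k) vec \<Rightarrow> ('h,'k) vec"
    and \<Delta> :: "('c,'k) vec \<Rightarrow> ('c \<times> 'c,'k) vec"
    and \<epsilon> :: "('c,'k) vec \<Rightarrow> 'k"
    and act :: "('c,'k) vec \<Rightarrow> ('h,'k) vec \<Rightarrow> ('c,'k) vec"
  assumes H: "hopf_algebra m u \<Delta>H \<epsilon>H S"
    and C: "hopf_galois_coobject m u \<Delta>H \<epsilon>H \<Delta> \<epsilon> act"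
  shows
    "hopf_heap \<Delta> \<epsilon> (\<lambda>a b c. act a (cotrans \<Delta> \<epsilon> act (tsr b c)))
     \<and> grunspan_map \<Delta> \<epsilon> (\<lambda>a b c. act a (cotrans \<Delta> \<epsilon> act (tsr b c)))
         (\<lambda>c. tlift (\<lambda>x c3. tlift (\<lambda>c1 c2. act c1 (S (cotrans \<Delta> \<epsilon> act (tsr c3 c2)))) (\<Delta> x)) (\<Delta> c))
     \<and> (let chi = (\<lambda>a b c. act a (cotrans \<Delta> \<epsilon> act (tsr b c)));
            \<tau> = cotrans \<Delta> \<epsilon> act;
            T = Tn chi
        in \<exists>\<phi>. (\<forall>a b. \<phi> (transl chi a b) = \<tau> (tsr a b))
            \<and> (\<forall>x\<in>T. \<forall>y\<in>T. \<phi> (x + y) = \<phi> x + \<phi> y)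
            \<and> (\<forall>c. \<forall>x\<in>T. \<phi> (fsc c x) = sc c (\<phi> x))
            \<and> bij_betw \<phi> T UNIV
            \<and> id \<in> T \<and> \<phi> id = u
            \<and> (\<forall>x\<in>T. \<forall>y\<in>T. \<phi> (y \<circ> x) = m (\<phi> x) (\<phi> y))
            \<and> (\<forall>a b. \<Delta>H (\<tau> (tsr a b)) =
                 tlift (\<lambda>a1 a2. tlift (\<lambda>b1 b2. tsr (\<tau> (tsr a2 b1)) (\<tau> (tsr a1 b2))) (\<Delta> b)) (\<Delta> a))
            \<and> (\<forall>a b. \<epsilon>H (\<tau> (tsr a b)) = \<epsilon> a * \<epsilon> b)
            \<and> (\<forall>e. \<epsilon> e = 1 \<longrightarrow>
                 (\<forall>h. (\<lambda>v. tlift (\<lambda>e1 e2. chi v e1 (act e2 h)) (\<Delta> e)) \<in> T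
                      \<and> \<phi> (\<lambda>v. tlift (\<lambda>e1 e2. chi v e1 (act e2 h)) (\<Delta> e)) = h)
                 \<and> (\<forall>x\<in>T. (\<lambda>v. tlift (\<lambda>e1 e2. chi v e1 (act e2 (\<phi> x))) (\<Delta> e)) = x)))"
proof -
  interpret HG \<Delta> \<epsilon> \<Delta>H \<epsilon>H m u S act
  proof unfold_locales
    show "coalgebra \<Delta> \<epsilon>" using C by (simp add: hopf_galois_coobject_def module_coalgebra_def)
    show "coalgebra \<Delta>H \<epsilon>H" using H by (simp add: hopf_algebra_def)
  qed (fact H C)+
  have th: "(\<lambda>c. tlift (\<lambda>x c3. tlift (\<lambda>c1 c2. act c1 (S (cotrans \<Delta> \<epsilon> act (tsr c3 c2)))) (\<Delta> x)) (\<Delta> c)) = theta"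
    by (simp add: theta_def[abs_def])
  show ?thesis
    unfolding th Let_def using heap grunspan Tn_part by blast
qed


end
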